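(* Let $\mu$ be a strict partition. Then for every integer $n\ge0$, $$\sum_{|\lambda/\mu|=n}\frac{2^{|\lambda|-\ell(\lambda)-|\mu|+\ell(\mu)}f_{\lambda/\mu}H_\mu}{H_{\lambda}}\Bigl(\sum_{\square\in\lambda}\binom{c_{\square}}{2}-\sum_{\square\in\mu}\binom{c_{\square}}{2}\Bigr)=\binom{n}{2}+n|\mu|,$$ where the sum ranges over all strict partitions $\lambda\supseteq\mu$ with $|\lambda|-|\mu|=n$.
   Context: A strict partition is a finite strictly decreasing sequence of positive integers $\lambda=(\lambda_1>\lambda_2>\cdots>\lambda_\ell)$ (the empty sequence $\emptyset$ is allowed); $|\lambda|=\sum_i\lambda_i$ is its size, $\ell(\lambda)=\ell$ its length, and $\lambda_i=0$ for $i>\ell(\lambda)$. The (shifted Young) diagram of $\lambda$ is the set of boxes $(i,j)$ with $1\le i\le \ell(\lambda)$ and $i+1\le j\le i+\lambda_i$ (row $i$, column $j$); $\lambda$ is identified with its diagram. The content of a box $\square=(i,j)$ is $c_\square=j-i$. The hook length $h_\square$ of $\square=(i,j)\in\lambda$ is the number of boxes of $\lambda$ in row $i$ strictly to the right of $\square$, plus the number of boxes $(i',j)\in\lambda$ with $i'>i$, plus $1$, plus $\lambda_j$. $H_\lambda=\prod_{\square\in\lambda}h_\square$ ($H_\emptyset=1$). For strict partitions write $\lambda\supseteq\mu$ if $\lambda_i\ge\mu_i$ for all $i$; then $\lambda/\mu$ denotes the set of boxes of $\lambda$ not in $\mu$, and $|\lambda/\mu|=|\lambda|-|\mu|$. $f_{\lambda/\mu}$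 is the number of standard shifted Young tableaux of shape $\lambda/\mu$, i.e. bijective fillings of the boxes of $\lambda/\mu$ with $1,\dots,|\lambda/\mu|$ increasing from left to right along rows and from top to bottom along columns ($f_{\mu/\mu}=1$). *)

theory Defs
  imports Complex_Main
begin

definition strict_partition :: "nat list \<Rightarrow> bool" where
  "strict_partition xs \<longleftrightarrow> sorted_wrt (>) xs \<and> (\<forall>x\<in>set xs. 0 < x)"

text \<open>lambda_i (1-based), with lambda_i = 0 for i > length.\<close>
definition part :: "nat list \<Rightarrow> nat \<Rightarrow> nat" where
  "part xs i = (if 1 \<le> i \<and> i \<le> length xs then xs ! (i - 1) else 0)"

definition psize :: "nat list \<Rightarrow> nat" where
  "psize xs = sum_list xs"

definition plen :: "nat list \<Rightarrow> nat" where
  "plen xs = length xs"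

text \<open>Shifted diagram: boxes (i,j) with 1 <= i <= l and i+1 <= j <= i + lambda_i.\<close>
definition diagram :: "nat list \<Rightarrow> (nat \<times> nat) set" where
  "diagram xs = {(i, j). 1 \<le> i \<and> i \<le> length xs \<and> i + 1 \<le> j \<and> j \<le> i + part xs i}"

definition content :: "nat \<times> nat \<Rightarrow> int" where
  "content b = int (snd b) - int (fst b)"

definition hook :: "nat list \<Rightarrow> nat \<times> nat \<Rightarrow> nat" where
  "hook xs b = (case b of (i, j) \<Rightarrow>
     card {j'. (i, j') \<in> diagram xs \<and> j' > j}
   + card {i'. (i', j) \<in> diagram xs \<and> i' > i} + 1 + part xs j)"

definition hookprod :: "nat list \<Rightarrow> nat" where
  "hookprod xs = (\<Prod>b\<in>diagram xs. hook xs b)"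

definition contains :: "nat list \<Rightarrow> nat list \<Rightarrow> bool" where
  "contains lam mu \<longleftrightarrow> (\<forall>i. part mu i \<le> part lam i)"

definition skew :: "nat list \<Rightarrow> nat list \<Rightarrow> (nat \<times> nat) set" where
  "skew lam mu = diagram lam - diagram mu"

text \<open>Standard shifted Young tableaux of shape S (as fillings, extended by 0 outside S).\<close>
definition standard_tableaux :: "(nat \<times> nat) set \<Rightarrow> ((nat \<times> nat) \<Rightarrow> nat) set" where
  "standard_tableaux S = {T. bij_betw T S {1..card S} \<and> (\<forall>b. b \<notin> S \<longrightarrow> T b = 0)
      \<and> (\<forall>i j j'. (i, j) \<in> S \<and> (i, j') \<in> S \<and> j < j' \<longrightarrow> T (i, j) < T (i, j'))
      \<and> (\<forall>i i' j. (i, j) \<in> S \<and> (i', j) \<in> S \<and> i < i' \<longrightarrow> T (i, j) < T (i', j))}"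

definition num_syt :: "nat list \<Rightarrow> nat list \<Rightarrow> nat" where
  "num_syt lam mu = card (standard_tableaux (skew lam mu))"

end

theory Submission
  imports Defs "HOL-Computational_Algebra.Polynomial"
begin

hide_const (open) Polynomial.content


lemma prod_lin_degree:
  fixes f :: "'b \<Rightarrow> real" assumes "finite W"
  shows "degree (\<Prod>w\<in>W. [:-f w,1:]) = card W" and "coeff (\<Prod>w\<in>W. [:-f w,1:]) (card W) = 1"
proof -
  show d: "degree (\<Prod>w\<in>W. [:-f w,1:]) = card W"
    by (subst degree_prod_eq_sum_degree) auto
  have "lead_coeff (\<Prod>w\<in>W. [:-f w,1:]) = 1" by (simp add: lead_coeff_prod)
  then show "coeff (\<Prod>w\<in>W. [:-f w,1:]) (card W) = 1" using d by simp
qed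

lemma prod_lin_coeff2:
  fixes f :: "'b \<Rightarrow> real" assumes "finite W" "card W = Suc m"
  shows "coeff (\<Prod>w\<in>W. [:-f w,1:]) m = - (\<Sum>w\<in>W. f w)"
  using assms
proof (induction W arbitrary: m rule: finite_induct)
  case empty then show ?case by simp
next
  case (insert a F)
  then have cF: "card F = m" by simp
  have "(\<Prod>w\<in>insert a F. [:-f w,1:]) = [:-f a,1:] * (\<Prod>w\<in>F. [:-f w,1:])"
    using insert by simp
  also have "coeff \<dots> m = - f a * coeff (\<Prod>w\<in>F. [:-f w,1:]) m + (case m of 0 \<Rightarrow> 0 | Suc k \<Rightarrow> coeff (\<Prod>w\<in>F. [:-f w,1:]) k)"
    by (simp add: coeff_pCons split: nat.split)
  also have "coeff (\<Prod>w\<in>F. [:-f w,1:]) m = 1" using prod_lin_degree(2)[OF insert(1), of f] cF by simp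
  also have "(case m of 0 \<Rightarrow> 0 | Suc k \<Rightarrow> coeff (\<Prod>w\<in>F. [:-f w,1:]) k) = - (\<Sum>w\<in>F. f w)"
  proof (cases m)
    case 0 then show ?thesis using cF insert by simp
  next
    case (Suc k) then show ?thesis using insert.IH[of k] cF by simp
  qed
  finally show ?case using insert by simp
qed

lemma lagrange_coeff:
  fixes Z :: "real set" and G :: "real poly"
  assumes fin: "finite Z" and cZ: "card Z = Suc m" and dG: "degree G \<le> m"
  shows "(\<Sum>z\<in>Z. poly G z / (\<Prod>w\<in>Z-{z}. z - w)) = coeff G m"
proof -
  define c where "c z = poly G z / (\<Prod>w\<in>Z-{z}. z - w)" for z
  define B where "B z = (\<Prod>w\<in>Z-{z}. [:-w,1:])" for z
  define L where "L = (\<Sum>z\<in>Z. smult (c z) (B z))"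
  have cardB: "z \<in> Z \<Longrightarrow> card (Z - {z}) = m" for z using cZ fin by simp
  have degB: "z \<in> Z \<Longrightarrow> degree (B z) = m" for z
    unfolding B_def using prod_lin_degree(1)[of "Z-{z}" "\<lambda>w. w"] fin cardB by simp
  have cB: "z \<in> Z \<Longrightarrow> coeff (B z) m = 1" for z
    unfolding B_def using prod_lin_degree(2)[of "Z-{z}" "\<lambda>w. w"] fin cardB by simp
  have dL: "degree L \<le> m" unfolding L_def
    by (rule degree_sum_le) (use fin degB in \<open>auto intro: order.trans[OF degree_smult_le]\<close>)
  have pB: "z \<in> Z \<Longrightarrow> poly (B z) x = (\<Prod>w\<in>Z-{z}. x - w)" for z x
    unfolding B_def by (simp add: poly_prod)
  have ev: "poly L x = poly G x" if x: "x \<in> Z" for x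
  proof -
    have "poly L x = (\<Sum>z\<in>Z. c z * poly (B z) x)" unfolding L_def by (simp add: poly_sum)
    also have "\<dots> = c x * poly (B x) x"
    proof (rule sum.remove[OF fin x, THEN trans])
      have "(\<Sum>z\<in>Z-{x}. c z * poly (B z) x) = 0"
      proof (rule sum.neutral, intro ballI)
        fix z assume z: "z \<in> Z - {x}"
        have "(\<Prod>w\<in>Z-{z}. x - w) = 0"
          using z x fin by (intro prod_zero) (auto intro!: bexI[of _ x])
        then show "c z * poly (B z) x = 0" using z by (simp add: pB)
      qed
      then show "c x * poly (B x) x + (\<Sum>z\<in>Z-{x}. c z * poly (B z) x) = c x * poly (B x) x" by simp
    qed
    also have "\<dots> = poly G x"
    proof -
      have "(\<Prod>w\<in>Z-{x}. x - w) \<noteq> 0" using fin by (subst prod_zero_iff) auto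
      then show ?thesis unfolding c_def using pB[OF x] by simp
    qed
    finally show ?thesis .
  qed
  have "G = L"
    by (rule poly_eqI_degree[of Z]) (use ev cZ dG dL in auto)
  then have "coeff G m = (\<Sum>z\<in>Z. c z * coeff (B z) m)" unfolding L_def by (simp add: coeff_sum)
  also have "\<dots> = (\<Sum>z\<in>Z. c z)" by (rule sum.cong) (auto simp: cB)
  finally show ?thesis unfolding c_def by simp
qed


definition QQ :: "nat \<Rightarrow> real" where "QQ y = real y * (real y + 1)"
definition qq :: "nat \<Rightarrow> real" where "qq y = (real y - 1) * real y"

definition Aw :: "nat set \<Rightarrow> nat \<Rightarrow> real" where
  "Aw X x = 2 / (real x + 1) * (\<Prod>y\<in>X-{x}. (QQ x - qq y) / (QQ x - QQ y))"
definition A0 :: "nat set \<Rightarrow> real" where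
  "A0 X = (\<Prod>y\<in>X. qq y / QQ y)"

lemma QQ_inj: "inj QQ"
proof (rule injI)
  fix a b assume "QQ a = QQ b"
  then have "real a * (real a + 1) = real b * (real b + 1)" by (simp add: QQ_def)
  then have "(real a - real b) * (real a + real b + 1) = 0" by (simp add: algebra_simps)
  then show "a = b" by (auto simp: add_nonneg_eq_0_iff)
qed

lemma QQ_eq_iff[simp]: "QQ a = QQ b \<longleftrightarrow> a = b" using QQ_inj by (auto dest: injD)
lemma QQ_0[simp]: "QQ 0 = 0" by (simp add: QQ_def)
lemma QQ_eq0[simp]: "QQ a = 0 \<longleftrightarrow> a = 0" using QQ_eq_iff[of a 0] by simp
lemma card_QQ: "card (QQ ` A) = card A" by (rule card_image) (auto simp: inj_on_def)

lemma ident1: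
  assumes fin: "finite X" and X0: "0 \<notin> X"
  shows "A0 X + (\<Sum>x\<in>X. Aw X x) = 1"
proof -
  define G where "G = (\<Prod>y\<in>X. [:-qq y,1:])"
  define Z where "Z = QQ ` insert 0 X"
  have cZ: "card Z = Suc (card X)"
  proof -
    have "0 \<notin> QQ ` X" using X0 by (auto simp del: QQ_eq_iff)
    then show ?thesis using fin unfolding Z_def by (simp add: card_QQ)
  qed
  have "(\<Sum>z\<in>Z. poly G z / (\<Prod>w\<in>Z-{z}. z - w)) = coeff G (card X)"
    by (rule lagrange_coeff) (use fin cZ in \<open>auto simp: Z_def G_def prod_lin_degree\<close>)
  also have "\<dots> = 1" unfolding G_def by (rule prod_lin_degree(2)[OF fin])
  finally have L: "(\<Sum>z\<in>Z. poly G z / (\<Prod>w\<in>Z-{z}. z - w)) = 1" .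
  have "(\<Sum>z\<in>Z. poly G z / (\<Prod>w\<in>Z-{z}. z - w)) =
        (\<Sum>y\<in>insert 0 X. poly G (QQ y) / (\<Prod>w\<in>Z-{QQ y}. QQ y - w))"
    unfolding Z_def by (subst sum.reindex) (auto simp: inj_on_def)
  also have "\<dots> = poly G 0 / (\<Prod>w\<in>Z-{0}. 0 - w) + (\<Sum>y\<in>X. poly G (QQ y) / (\<Prod>w\<in>Z-{QQ y}. QQ y - w))"
    using fin X0 by simp
  also have "poly G 0 / (\<Prod>w\<in>Z-{0}. 0 - w) = A0 X"
  proof -
    have "Z - {0} = QQ ` X" unfolding Z_def using X0 by auto
    then have "(\<Prod>w\<in>Z-{0}. 0 - w) = (\<Prod>y\<in>X. - QQ y)"
      by (simp add: prod.reindex inj_on_def)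
    moreover have "poly G 0 = (\<Prod>y\<in>X. - qq y)" unfolding G_def by (simp add: poly_prod)
    moreover have "(\<Prod>y\<in>X. - qq y) / (\<Prod>y\<in>X. - QQ y) = (\<Prod>y\<in>X. (- qq y) / (- QQ y))"
      by (rule prod_dividef[symmetric])
    ultimately show ?thesis unfolding A0_def by simp
  qed
  also have "(\<Sum>y\<in>X. poly G (QQ y) / (\<Prod>w\<in>Z-{QQ y}. QQ y - w)) = (\<Sum>x\<in>X. Aw X x)"
  proof (rule sum.cong[OF refl])
    fix x assume x: "x \<in> X"
    have x0: "x \<noteq> 0" using x X0 by metis
    have "Z - {QQ x} = insert 0 (QQ ` (X - {x}))" unfolding Z_def using X0 x by auto
    moreover have "0 \<notin> QQ ` (X - {x})" using X0 by (auto simp del: QQ_eq_iff)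
    ultimately have "(\<Prod>w\<in>Z-{QQ x}. QQ x - w) = QQ x * (\<Prod>y\<in>X-{x}. QQ x - QQ y)"
      using fin X0 by (simp add: prod.reindex inj_on_def)
    moreover have "poly G (QQ x) = (QQ x - qq x) * (\<Prod>y\<in>X-{x}. QQ x - qq y)"
      unfolding G_def using fin x by (simp add: poly_prod prod.remove left_diff_distrib)
    moreover have "(QQ x - qq x) / QQ x = 2 / (real x + 1)"
    proof -
      have "QQ x - qq x = 2 * real x" by (simp add: QQ_def qq_def algebra_simps)
      moreover have "QQ x = real x * (real x + 1)" by (simp add: QQ_def)
      moreover have "2 * real x / (real x * (real x + 1)) = 2 / (real x + 1)" using x0 by simp
      ultimately show ?thesis by (simp only:)
    qed
    ultimately have "poly G (QQ x) / (\<Prod>w\<in>Z-{QQ x}. QQ x - w) =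
       ((QQ x - qq x) / QQ x) * ((\<Prod>y\<in>X-{x}. QQ x - qq y) / (\<Prod>y\<in>X-{x}. QQ x - QQ y))"
      by (metis times_divide_times_eq)
    then show "poly G (QQ x) / (\<Prod>w\<in>Z-{QQ x}. QQ x - w) = Aw X x"
      unfolding Aw_def using \<open>(QQ x - qq x) / QQ x = 2 / (real x + 1)\<close> by (simp add: prod_dividef)
  qed
  finally show ?thesis using L by simp
qed

lemma ident2:
  assumes fin: "finite X" and X0: "0 \<notin> X"
  shows "(\<Sum>x\<in>X. Aw X x * QQ x) = 2 * (\<Sum>x\<in>X. real x)"
proof (cases "X = {}")
  case True then show ?thesis by simp
next
  case False
  then obtain m where cX: "card X = Suc m" using fin by (cases "card X") auto
  define G where "G = (\<Prod>y\<in>X. [:-qq y,1:]) - (\<Prod>y\<in>X. [:-QQ y,1:])"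
  define Z where "Z = QQ ` X"
  have cZ: "card Z = Suc m" unfolding Z_def using cX by (simp add: card_QQ)
  have dG: "degree G \<le> m"
  proof (rule degree_le, intro allI impI)
    fix i assume "m < i"
    then consider "i = card X" | "i > card X" using cX by linarith
    then show "coeff G i = 0"
    proof cases
      case 1 then show ?thesis unfolding G_def using prod_lin_degree(2)[OF fin] by simp
    next
      case 2 then show ?thesis unfolding G_def
        using prod_lin_degree(1)[OF fin, of qq] prod_lin_degree(1)[OF fin, of QQ]
        by (simp add: coeff_eq_0)
    qed
  qed
  have "(\<Sum>z\<in>Z. poly G z / (\<Prod>w\<in>Z-{z}. z - w)) = coeff G m"
    by (rule lagrange_coeff) (use fin cZ dG in \<open>auto simp: Z_def\<close>)
  also have "\<dots> = (\<Sum>y\<in>X. QQ y) - (\<Sum>y\<in>X. qq y)"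
    unfolding G_def using prod_lin_coeff2[OF fin cX] by simp
  also have "\<dots> = 2 * (\<Sum>x\<in>X. real x)"
    by (simp add: sum_subtractf[symmetric] sum_distrib_left sum_distrib_right QQ_def qq_def algebra_simps)
  finally have L: "(\<Sum>z\<in>Z. poly G z / (\<Prod>w\<in>Z-{z}. z - w)) = 2 * (\<Sum>x\<in>X. real x)" .
  have "(\<Sum>z\<in>Z. poly G z / (\<Prod>w\<in>Z-{z}. z - w)) =
        (\<Sum>y\<in>X. poly G (QQ y) / (\<Prod>w\<in>Z-{QQ y}. QQ y - w))"
    unfolding Z_def by (subst sum.reindex) (auto simp: inj_on_def)
  also have "\<dots> = (\<Sum>x\<in>X. Aw X x * QQ x)"
  proof (rule sum.cong[OF refl])
    fix x assume x: "x \<in> X"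
    have x0: "x \<noteq> 0" using x X0 by metis
    have "Z - {QQ x} = QQ ` (X - {x})" unfolding Z_def using x by auto
    then have "(\<Prod>w\<in>Z-{QQ x}. QQ x - w) = (\<Prod>y\<in>X-{x}. QQ x - QQ y)"
      using fin by (simp add: prod.reindex inj_on_def)
    moreover have "poly G (QQ x) = (QQ x - qq x) * (\<Prod>y\<in>X-{x}. QQ x - qq y)"
    proof -
      have "poly (\<Prod>y\<in>X. [:-QQ y,1:]) (QQ x) = 0" using fin x
        by (auto simp: poly_prod intro!: prod_zero bexI[of _ x])
      then show ?thesis unfolding G_def using fin x by (simp add: poly_prod prod.remove left_diff_distrib)
    qed
    moreover have "(QQ x - qq x) = 2 / (real x + 1) * QQ x"
      using x0 by (simp add: QQ_def qq_def field_simps)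
    ultimately show "poly G (QQ x) / (\<Prod>w\<in>Z-{QQ x}. QQ x - w) = Aw X x * QQ x"
      unfolding Aw_def by (simp add: prod_dividef)
  qed
  finally show ?thesis using L by simp
qed


lemma part_0[simp]: "part xs 0 = 0" by (simp add: Defs.part_def)
lemma part_beyond: "length xs < i \<Longrightarrow> part xs i = 0" by (simp add: Defs.part_def)
lemma part_Cons_1[simp]: "part (a#xs) (Suc 0) = a" by (simp add: Defs.part_def)
lemma part_Cons_Suc: "1 \<le> i \<Longrightarrow> part (a#xs) (Suc i) = part xs i"
  by (auto simp: Defs.part_def nth_Cons split: nat.split)
lemma part_Nil[simp]: "part [] i = 0" by (simp add: Defs.part_def)

lemma part_le_sum: "part xs i \<le> sum_list xs"
  by (auto simp: Defs.part_def intro!: elem_le_sum_list)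

lemma sp_iff: "strict_partition xs \<longleftrightarrow>
   (\<forall>i. 1 \<le> i \<and> i \<le> length xs \<longrightarrow> 0 < part xs i) \<and>
   (\<forall>i. 1 \<le> i \<and> Suc i \<le> length xs \<longrightarrow> part xs (Suc i) < part xs i)"
proof -
  have t: "transp ((>) :: nat \<Rightarrow> nat \<Rightarrow> bool)" by (auto simp: transp_def)
  have A: "(\<forall>x\<in>set xs. 0 < x) \<longleftrightarrow> (\<forall>i. 1 \<le> i \<and> i \<le> length xs \<longrightarrow> 0 < part xs i)"
  proof
    assume "\<forall>x\<in>set xs. 0 < x" then show "\<forall>i. 1 \<le> i \<and> i \<le> length xs \<longrightarrow> 0 < part xs i"
      by (auto simp: Defs.part_def)
  next
    assume H: "\<forall>i. 1 \<le> i \<and> i \<le> length xs \<longrightarrow> 0 < part xs i"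
    show "\<forall>x\<in>set xs. 0 < x"
    proof
      fix x assume "x \<in> set xs"
      then obtain k where k: "k < length xs" "xs ! k = x" by (auto simp: in_set_conv_nth)
      then show "0 < x" using H[rule_format, of "Suc k"] by (simp add: Defs.part_def)
    qed
  qed
  have B: "sorted_wrt (>) xs \<longleftrightarrow> (\<forall>i. 1 \<le> i \<and> Suc i \<le> length xs \<longrightarrow> part xs (Suc i) < part xs i)"
  proof -
    have "sorted_wrt (>) xs \<longleftrightarrow> (\<forall>i. Suc i < length xs \<longrightarrow> xs ! i > xs ! Suc i)"
      by (rule sorted_wrt_iff_nth_Suc_transp[OF t])
    also have "\<dots> \<longleftrightarrow> (\<forall>i. 1 \<le> i \<and> Suc i \<le> length xs \<longrightarrow> part xs (Suc i) < part xs i)"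
    proof
      assume H: "\<forall>i. Suc i < length xs \<longrightarrow> xs ! i > xs ! Suc i"
      show "\<forall>i. 1 \<le> i \<and> Suc i \<le> length xs \<longrightarrow> part xs (Suc i) < part xs i"
      proof (intro allI impI)
        fix i assume i: "1 \<le> i \<and> Suc i \<le> length xs"
        then obtain k where k: "i = Suc k" by (cases i) auto
        then show "part xs (Suc i) < part xs i" using H[rule_format, of k] i by (simp add: Defs.part_def)
      qed
    next
      assume H: "\<forall>i. 1 \<le> i \<and> Suc i \<le> length xs \<longrightarrow> part xs (Suc i) < part xs i"
      show "\<forall>i. Suc i < length xs \<longrightarrow> xs ! i > xs ! Suc i"
      proof (intro allI impI)
        fix i assume i: "Suc i < length xs"
        then show "xs ! i > xs ! Suc i" using H[rule_format, of "Suc i"] by (simp add: Defs.part_def)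
      qed
    qed
    finally show ?thesis .
  qed
  show ?thesis unfolding Defs.strict_partition_def using A B by blast
qed

lemma sp_pos: "strict_partition xs \<Longrightarrow> 1 \<le> i \<Longrightarrow> i \<le> length xs \<Longrightarrow> 0 < part xs i"
  by (simp add: sp_iff)
lemma sp_dec: "strict_partition xs \<Longrightarrow> 1 \<le> i \<Longrightarrow> Suc i \<le> length xs \<Longrightarrow> part xs (Suc i) < part xs i"
  by (simp add: sp_iff)

lemma sp_gap:
  assumes "strict_partition xs" "1 \<le> i" "i \<le> k" "k \<le> length xs"
  shows "part xs k + (k - i) \<le> part xs i"
  using assms(3,4)
proof (induction k rule: dec_induct)
  case base then show ?case by simp
next
  case (step k)
  have "part xs (Suc k) < part xs k" using sp_dec[OF assms(1), of k] step assms(2) by simp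
  then show ?case using step by simp
qed

lemma sp_lt: "strict_partition xs \<Longrightarrow> 1 \<le> i \<Longrightarrow> i < k \<Longrightarrow> part xs k < part xs i \<or> part xs k = 0"
proof (cases "k \<le> length xs")
  case True
  assume "strict_partition xs" "1 \<le> i" "i < k"
  then have "part xs k + (k - i) \<le> part xs i" using sp_gap[of xs i k] True by simp
  then show ?thesis using \<open>i < k\<close> by linarith
qed (simp add: part_beyond)

lemma sp_le: "strict_partition xs \<Longrightarrow> 1 \<le> i \<Longrightarrow> i \<le> k \<Longrightarrow> part xs k \<le> part xs i"
  using sp_lt[of xs i k] by (cases "i = k") auto

lemma part_eq_imp_eq:
  assumes "\<forall>x\<in>set xs. 0 < x" "\<forall>x\<in>set ys. 0 < x" "part xs = part ys"
  shows "xs = ys"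
proof -
  have len: "length xs = length ys"
  proof (rule ccontr)
    assume ne: "length xs \<noteq> length ys"
    show False
    proof (cases "length xs < length ys")
      case True
      have "ys ! (length ys - 1) \<in> set ys" using True by (intro nth_mem) simp
      then have "part ys (length ys) > 0" using True assms(2) by (auto simp: Defs.part_def)
      moreover have "part xs (length ys) = 0" using True by (simp add: part_beyond)
      ultimately show False using assms(3) by simp
    next
      case False
      then have lt: "length ys < length xs" using ne by simp
      have "xs ! (length xs - 1) \<in> set xs" using lt by (intro nth_mem) simp
      then have "part xs (length xs) > 0" using lt assms(1) by (auto simp: Defs.part_def)
      moreover have "part ys (length xs) = 0" using lt by (simp add: part_beyond)
      ultimately show False using assms(3) by simp
    qed
  qed
  show ?thesis
  proof (rule nth_equalityI[OF len])
    fix k assume "k < length xs"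
    then show "xs ! k = ys ! k" using fun_cong[OF assms(3), of "Suc k"] len by (simp add: Defs.part_def)
  qed
qed

lemma sp_eq_imp_eq: "strict_partition xs \<Longrightarrow> strict_partition ys \<Longrightarrow> part xs = part ys \<Longrightarrow> xs = ys"
  by (rule part_eq_imp_eq) (auto simp: Defs.strict_partition_def)

lemma diagram_alt: "diagram xs = {(i, j). 1 \<le> i \<and> i < j \<and> j \<le> i + part xs i}"
  unfolding Defs.diagram_def by (auto simp: Defs.part_def split: if_splits)

lemma diagram_sub: "diagram xs \<subseteq> {1..length xs} \<times> {0..length xs + sum_list xs}"
proof
  fix b assume "b \<in> diagram xs"
  then obtain i j where b: "b = (i,j)" "1 \<le> i" "i \<le> length xs" "j \<le> i + part xs i"
    unfolding Defs.diagram_def by auto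
  have "part xs i \<le> sum_list xs" by (rule part_le_sum)
  then show "b \<in> {1..length xs} \<times> {0..length xs + sum_list xs}" using b by auto
qed

lemma finite_diagram[simp]: "finite (diagram xs)"
  by (rule finite_subset[OF diagram_sub]) auto

lemma hookprod_pos: "0 < hookprod xs"
  unfolding Defs.hookprod_def by (rule prod_pos) (auto simp: Defs.hook_def split: prod.split)

lemma psize_part_upto: "length xs \<le> N \<Longrightarrow> psize xs = (\<Sum>i=1..N. part xs i)"
proof (induction xs arbitrary: N)
  case Nil then show ?case by (simp add: Defs.psize_def)
next
  case (Cons a xs)
  then obtain M where N: "N = Suc M" and M: "length xs \<le> M" by (cases N) auto
  have "(\<Sum>i=1..N. part (a#xs) i) = part (a#xs) 1 + (\<Sum>i=2..N. part (a#xs) i)"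
    using N by (simp add: sum.atLeast_Suc_atMost numeral_2_eq_2)
  also have "(\<Sum>i=2..N. part (a#xs) i) = (\<Sum>i=1..M. part (a#xs) (Suc i))"
    unfolding N by (subst sum.shift_bounds_cl_Suc_ivl[symmetric]) (simp add: numeral_2_eq_2)
  also have "\<dots> = (\<Sum>i=1..M. part xs i)" by (rule sum.cong) (auto simp: part_Cons_Suc)
  also have "\<dots> = psize xs" using Cons.IH[OF M] by simp
  finally show ?case by (simp add: Defs.psize_def)
qed


lemma diagram_Cons_Suc:
  assumes "1 \<le> i"
  shows "(Suc i, Suc j) \<in> diagram (a#xs) \<longleftrightarrow> (i, j) \<in> diagram xs"
  using assms by (simp add: diagram_alt part_Cons_Suc)

lemma diagram_Cons:
  "diagram (a#xs) = {(1, j) | j. 1 < j \<and> j \<le> Suc a} \<union> (\<lambda>(i,j). (Suc i, Suc j)) ` diagram xs"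
proof (intro set_eqI iffI)
  fix b assume b: "b \<in> diagram (a#xs)"
  then obtain i j where ij: "b = (i,j)" "1 \<le> i" "i < j" "j \<le> i + part (a#xs) i"
    by (auto simp: diagram_alt)
  show "b \<in> {(1, j) | j. 1 < j \<and> j \<le> Suc a} \<union> (\<lambda>(i,j). (Suc i, Suc j)) ` diagram xs"
  proof (cases "i = 1")
    case True then show ?thesis using ij by auto
  next
    case False
    then obtain i' where i': "i = Suc i'" "1 \<le> i'" using ij by (cases i) auto
    then obtain j' where j': "j = Suc j'" using ij by (cases j) auto
    have "(i', j') \<in> diagram xs" using diagram_Cons_Suc[OF i'(2)] b ij i' j' by simp
    then show ?thesis using ij i' j' by (auto intro!: image_eqI[of _ _ "(i',j')"])
  qed
next
  fix b assume "b \<in> {(1, j) | j. 1 < j \<and> j \<le> Suc a} \<union> (\<lambda>(i,j). (Suc i, Suc j)) ` diagram xs"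
  then show "b \<in> diagram (a#xs)"
  proof
    assume "b \<in> {(1, j) | j. 1 < j \<and> j \<le> Suc a}" then show ?thesis by (auto simp: diagram_alt)
  next
    assume "b \<in> (\<lambda>(i,j). (Suc i, Suc j)) ` diagram xs"
    then obtain i j where "(i,j) \<in> diagram xs" "b = (Suc i, Suc j)" by auto
    moreover then have "1 \<le> i" by (auto simp: diagram_alt)
    ultimately show ?thesis using diagram_Cons_Suc by auto
  qed
qed

lemma hook_Cons_Suc:
  assumes ij: "(i,j) \<in> diagram xs"
  shows "hook (a#xs) (Suc i, Suc j) = hook xs (i,j)"
proof -
  have i1: "1 \<le> i" and ij': "i < j" using ij by (auto simp: diagram_alt)
  have A: "{j'. (Suc i, j') \<in> diagram (a#xs) \<and> j' > Suc j} = Suc ` {j'. (i, j') \<in> diagram xs \<and> j' > j}"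
  proof (intro set_eqI iffI)
    fix x assume x: "x \<in> {j'. (Suc i, j') \<in> diagram (a#xs) \<and> j' > Suc j}"
    then obtain x' where "x = Suc x'" by (cases x) auto
    then show "x \<in> Suc ` {j'. (i, j') \<in> diagram xs \<and> j' > j}" using x diagram_Cons_Suc[OF i1] by auto
  qed (use diagram_Cons_Suc[OF i1] in auto)
  have B: "{i'. (i', Suc j) \<in> diagram (a#xs) \<and> i' > Suc i} = Suc ` {i'. (i', j) \<in> diagram xs \<and> i' > i}"
  proof (intro set_eqI iffI)
    fix x assume x: "x \<in> {i'. (i', Suc j) \<in> diagram (a#xs) \<and> i' > Suc i}"
    then obtain x' where x': "x = Suc x'" by (cases x) auto
    then have "1 \<le> x'" using x i1 by simp
    then show "x \<in> Suc ` {i'. (i', j) \<in> diagram xs \<and> i' > i}" using x x' diagram_Cons_Suc by auto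
  next
    fix x assume "x \<in> Suc ` {i'. (i', j) \<in> diagram xs \<and> i' > i}"
    then obtain x' where x': "x = Suc x'" "(x', j) \<in> diagram xs" "x' > i" by auto
    then have "1 \<le> x'" using i1 by simp
    then show "x \<in> {i'. (i', Suc j) \<in> diagram (a#xs) \<and> i' > Suc i}" using x' diagram_Cons_Suc by auto
  qed
  have C: "part (a#xs) (Suc j) = part xs j" using i1 ij' by (simp add: part_Cons_Suc)
  show ?thesis unfolding Defs.hook_def using A B C by (simp add: card_image)
qed

lemma hookprod_Cons:
  "hookprod (a#xs) = (\<Prod>j\<in>{2..Suc a}. hook (a#xs) (1, j)) * hookprod xs"
proof -
  have disj: "{(1, j) | j. 1 < j \<and> j \<le> Suc a} \<inter> (\<lambda>(i,j). (Suc i, Suc j)) ` diagram xs = {}"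
    by (auto simp: diagram_alt)
  have fin1: "finite {(1::nat, j) | j. 1 < j \<and> j \<le> Suc a}"
    by (rule finite_subset[of _ "{1} \<times> {0..Suc a}"]) auto
  have r1: "{(1, j) | j. 1 < j \<and> j \<le> Suc a} = (\<lambda>j. (1::nat, j)) ` {2..Suc a}" by auto
  have "hookprod (a#xs) = (\<Prod>b\<in>{(1, j) | j. 1 < j \<and> j \<le> Suc a}. hook (a#xs) b) *
                          (\<Prod>b\<in>(\<lambda>(i,j). (Suc i, Suc j)) ` diagram xs. hook (a#xs) b)"
    unfolding Defs.hookprod_def diagram_Cons by (rule prod.union_disjoint) (use disj fin1 in auto)
  also have "(\<Prod>b\<in>{(1, j) | j. 1 < j \<and> j \<le> Suc a}. hook (a#xs) b) = (\<Prod>j\<in>{2..Suc a}. hook (a#xs) (1, j))"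
    unfolding r1 by (subst prod.reindex) (auto simp: inj_on_def)
  also have "(\<Prod>b\<in>(\<lambda>(i,j). (Suc i, Suc j)) ` diagram xs. hook (a#xs) b) = (\<Prod>b\<in>diagram xs. hook (a#xs) ((\<lambda>(i,j). (Suc i, Suc j)) b))"
    by (subst prod.reindex) (auto simp: inj_on_def)
  also have "\<dots> = hookprod xs" unfolding Defs.hookprod_def
    by (rule prod.cong) (auto simp: hook_Cons_Suc)
  finally show ?thesis .
qed

definition rowhook :: "nat \<Rightarrow> (nat \<Rightarrow> nat) \<Rightarrow> nat \<Rightarrow> nat" where
  "rowhook a p c = a - c + 1 + p c + card {s. 1 \<le> s \<and> s < c \<and> c \<le> s + p s}"

lemma hook_row1:
  assumes c: "1 \<le> c" "c \<le> a"
  shows "hook (a#xs) (1, Suc c) = rowhook a (part xs) c"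
proof -
  have A: "{j'. (1, j') \<in> diagram (a#xs) \<and> j' > Suc c} = {Suc c<..Suc a}"
    by (auto simp: diagram_alt)
  have B: "{i'. (i', Suc c) \<in> diagram (a#xs) \<and> i' > 1} = Suc ` {s. 1 \<le> s \<and> s < c \<and> c \<le> s + part xs s}"
  proof (intro set_eqI iffI)
    fix x assume x: "x \<in> {i'. (i', Suc c) \<in> diagram (a#xs) \<and> i' > 1}"
    then obtain x' where x': "x = Suc x'" "1 \<le> x'" by (cases x) auto
    then have "(x', c) \<in> diagram xs" using x diagram_Cons_Suc by auto
    then show "x \<in> Suc ` {s. 1 \<le> s \<and> s < c \<and> c \<le> s + part xs s}" using x' by (auto simp: diagram_alt)
  next
    fix x assume "x \<in> Suc ` {s. 1 \<le> s \<and> s < c \<and> c \<le> s + part xs s}"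
    then obtain x' where x': "x = Suc x'" "1 \<le> x'" "(x', c) \<in> diagram xs" by (auto simp: diagram_alt)
    then show "x \<in> {i'. (i', Suc c) \<in> diagram (a#xs) \<and> i' > 1}" using diagram_Cons_Suc by auto
  qed
  have C: "part (a#xs) (Suc c) = part xs c" using c by (simp add: part_Cons_Suc)
  show ?thesis unfolding Defs.hook_def rowhook_def using A B C c by (simp add: card_image)
qed

lemma hookprod_Cons':
  "hookprod (a#xs) = (\<Prod>c\<in>{1..a}. rowhook a (part xs) c) * hookprod xs"
proof -
  have "(\<Prod>j\<in>{2..Suc a}. hook (a#xs) (1, j)) = (\<Prod>c\<in>{1..a}. hook (a#xs) (1, Suc c))"
    by (subst prod.shift_bounds_cl_Suc_ivl[symmetric]) (simp add: numeral_2_eq_2)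
  also have "\<dots> = (\<Prod>c\<in>{1..a}. rowhook a (part xs) c)" by (rule prod.cong[OF refl], rule hook_row1) auto
  finally show ?thesis using hookprod_Cons by simp
qed

definition SPf :: "(nat \<Rightarrow> nat) \<Rightarrow> nat \<Rightarrow> bool" where
  "SPf p n \<longleftrightarrow> (\<forall>i. 1 \<le> i \<and> i \<le> n \<longrightarrow> 0 < p i) \<and> (\<forall>i. n < i \<longrightarrow> p i = 0)
     \<and> (\<forall>i. 1 \<le> i \<and> Suc i \<le> n \<longrightarrow> p (Suc i) < p i)"

lemma SPf_part: "strict_partition xs \<Longrightarrow> SPf (part xs) (length xs)"
  by (auto simp: SPf_def sp_iff part_beyond)

lemma SPf_gap:
  assumes "SPf p n" "1 \<le> i" "i \<le> k" "k \<le> n"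
  shows "p k + (k - i) \<le> p i"
  using assms(3,4)
proof (induction k rule: dec_induct)
  case base then show ?case by simp
next
  case (step k)
  have "p (Suc k) < p k" using assms(1,2) step unfolding SPf_def by simp
  then show ?case using step by simp
qed

lemma tele:
  "\<beta> < a \<Longrightarrow> (\<Prod>k\<in>{1..\<beta>}. real (a + 1 - k) / real (a - k)) = real a / real (a - \<beta>)"
proof (induction \<beta>)
  case 0 then show ?case by simp
next
  case (Suc b)
  then have IH: "(\<Prod>k\<in>{1..b}. real (a + 1 - k) / real (a - k)) = real a / real (a - b)" by simp
  have "(\<Prod>k\<in>{1..Suc b}. real (a + 1 - k) / real (a - k)) =
        (\<Prod>k\<in>{1..b}. real (a + 1 - k) / real (a - k)) * (real (a + 1 - Suc b) / real (a - Suc b))"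
    by simp
  also have "\<dots> = real a / real (a - b) * (real (a - b) / real (a - Suc b))"
    using IH Suc.prems by simp
  also have "\<dots> = real a / real (a - Suc b)" using Suc.prems by simp
  finally show ?case .
qed

lemma prod_rev_fact: "(\<Prod>c\<in>{1..a}. real (a - c + 1)) = fact a"
proof -
  have "(\<Prod>c\<in>{1..a}. real (a - c + 1)) = (\<Prod>c\<in>{1..a}. real (a - (a + 1 - c) + 1))"
    by (subst prod.atLeastAtMost_rev) simp
  also have "\<dots> = (\<Prod>c\<in>{1..a}. real c)" by (rule prod.cong) auto
  also have "\<dots> = fact a" by (simp add: fact_prod)
  finally show ?thesis .
qed

lemma rowprod:
  assumes "SPf p n" "1 \<le> n \<longrightarrow> p 1 < a"
  shows "(\<Prod>c\<in>{1..a}. real (rowhook a p c)) =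
         fact a * (\<Prod>s\<in>{1..n}. (real a + real (p s)) / (real a - real (p s)))"
  using assms
proof (induction n arbitrary: p)
  case 0
  then have p0: "\<And>i. 1 \<le> i \<Longrightarrow> p i = 0" unfolding SPf_def by auto
  have "rowhook a p c = a - c + 1" if "1 \<le> c" for c
  proof -
    have "{s. 1 \<le> s \<and> s < c \<and> c \<le> s + p s} = {}" using p0 by force
    then show ?thesis unfolding rowhook_def using p0 that by simp
  qed
  then have "(\<Prod>c\<in>{1..a}. real (rowhook a p c)) = (\<Prod>c\<in>{1..a}. real (a - c + 1))"
    by (intro prod.cong) auto
  then show ?case using prod_rev_fact by simp
next
  case (Suc m p)
  define t where "t = Suc m"
  define \<beta> where "\<beta> = p t"
  define p' where "p' = p(t := 0)"
  have SP: "SPf p (Suc m)" by fact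
  have SP': "SPf p' m" using SP unfolding SPf_def p'_def t_def by auto
  have p'1: "1 \<le> m \<longrightarrow> p' 1 < a" using Suc.prems unfolding p'_def t_def by auto
  have IH: "(\<Prod>c\<in>{1..a}. real (rowhook a p' c)) =
         fact a * (\<Prod>s\<in>{1..m}. (real a + real (p' s)) / (real a - real (p' s)))"
    using Suc.IH[OF SP' p'1] .
  have bpos: "0 < \<beta>" using SP unfolding SPf_def \<beta>_def t_def by auto
  have gap: "t + \<beta> \<le> s + p s" if "1 \<le> s" "s < t" for s
    using SPf_gap[OF SP, of s t] that unfolding t_def \<beta>_def by simp
  have p1: "p 1 < a" using Suc.prems by simp
  have at: "t + \<beta> \<le> a" using SPf_gap[OF SP, of 1 t] p1 unfolding t_def \<beta>_def by simp
  have pbig: "p s = 0" "p' s = 0" if "t < s" for s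
    using SP that unfolding SPf_def t_def p'_def by auto
  have pp': "p' s = p s" if "s \<noteq> t" for s using that unfolding p'_def by simp
  define h where "h c = rowhook a p c" for c
  define h' where "h' c = rowhook a p' c" for c
  have h'pos: "0 < h' c" for c unfolding h'_def rowhook_def by simp
  have c1: "h c = h' c" if "c < t" for c
  proof -
    have "{s. 1 \<le> s \<and> s < c \<and> c \<le> s + p s} = {s. 1 \<le> s \<and> s < c \<and> c \<le> s + p' s}"
      using that pp' by auto
    then show ?thesis unfolding h_def h'_def rowhook_def using that pp'[of c] by simp
  qed
  have Sfull: "{s. 1 \<le> s \<and> s < c \<and> c \<le> s + p s} = {1..<t} \<union> (if c \<le> t + \<beta> then {t} else {})"
    and S'full: "{s. 1 \<le> s \<and> s < c \<and> c \<le> s + p' s} = {1..<t}"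
    if "t < c" "c \<le> t + \<beta>" for c
  proof -
    show "{s. 1 \<le> s \<and> s < c \<and> c \<le> s + p s} = {1..<t} \<union> (if c \<le> t + \<beta> then {t} else {})"
    proof (intro set_eqI iffI)
      fix s assume s: "s \<in> {s. 1 \<le> s \<and> s < c \<and> c \<le> s + p s}"
      then show "s \<in> {1..<t} \<union> (if c \<le> t + \<beta> then {t} else {})"
        using pbig(1)[of s] that by (cases "t < s") auto
    next
      fix s assume "s \<in> {1..<t} \<union> (if c \<le> t + \<beta> then {t} else {})"
      then show "s \<in> {s. 1 \<le> s \<and> s < c \<and> c \<le> s + p s}"
        using gap[of s] that unfolding \<beta>_def t_def by (auto split: if_splits)
    qed
    show "{s. 1 \<le> s \<and> s < c \<and> c \<le> s + p' s} = {1..<t}"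
    proof (intro set_eqI iffI)
      fix s assume s: "s \<in> {s. 1 \<le> s \<and> s < c \<and> c \<le> s + p' s}"
      then show "s \<in> {1..<t}" using pbig(2)[of s] that unfolding p'_def
        by (cases "t < s") (auto split: if_splits)
    next
      fix s assume "s \<in> {1..<t}"
      then show "s \<in> {s. 1 \<le> s \<and> s < c \<and> c \<le> s + p' s}"
        using gap[of s] that pp'[of s] by auto
    qed
  qed
  have c3: "h c = a - c + t + 1" "h' c = a - c + t" if "t < c" "c \<le> t + \<beta>" for c
    using Sfull[OF that] S'full[OF that] that pbig[of c] at unfolding h_def h'_def rowhook_def t_def
    by auto
  have c4: "h c = h' c" if "t + \<beta> < c" for c
  proof -
    have "{s. 1 \<le> s \<and> s < c \<and> c \<le> s + p s} = {s. 1 \<le> s \<and> s < c \<and> c \<le> s + p' s}"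
    proof (intro Collect_cong iffI)
      fix s assume "1 \<le> s \<and> s < c \<and> c \<le> s + p s"
      then show "1 \<le> s \<and> s < c \<and> c \<le> s + p' s"
        using that pp'[of s] unfolding \<beta>_def by (cases "s = t") auto
    next
      fix s assume "1 \<le> s \<and> s < c \<and> c \<le> s + p' s"
      then show "1 \<le> s \<and> s < c \<and> c \<le> s + p s"
        using that pp'[of s] pbig[of s] unfolding p'_def by (cases "s = t") auto
    qed
    then show ?thesis unfolding h_def h'_def rowhook_def using that pbig[of c] by simp
  qed
  have c2: "h t = a + \<beta>" "h' t = a"
  proof -
    have A: "{s. 1 \<le> s \<and> s < t \<and> t \<le> s + p s} = {1..<t}" using gap by fastforce
    have B: "{s. 1 \<le> s \<and> s < t \<and> t \<le> s + p' s} = {1..<t}" using gap pp' by fastforce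
    show "h t = a + \<beta>" unfolding h_def rowhook_def A using at unfolding \<beta>_def t_def by simp
    show "h' t = a" unfolding h'_def rowhook_def B using at unfolding p'_def t_def by simp
  qed
  define r where "r c = real (h c) / real (h' c)" for c
  have "(\<Prod>c\<in>{1..a}. real (h c)) = (\<Prod>c\<in>{1..a}. real (h' c) * r c)"
    by (rule prod.cong) (auto simp: r_def h'pos[THEN less_imp_neq, symmetric])
  also have "\<dots> = (\<Prod>c\<in>{1..a}. real (h' c)) * (\<Prod>c\<in>{1..a}. r c)" by (rule prod.distrib)
  also have "(\<Prod>c\<in>{1..a}. r c) = (\<Prod>c\<in>{t..t+\<beta>}. r c)"
  proof (rule prod.mono_neutral_right)
    show "{t..t+\<beta>} \<subseteq> {1..a}" using at unfolding t_def by auto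
    show "\<forall>i\<in>{1..a} - {t..t + \<beta>}. r i = 1"
    proof
      fix c assume "c \<in> {1..a} - {t..t + \<beta>}"
      then have "c < t \<or> t + \<beta> < c" by auto
      then show "r c = 1" using c1 c4 h'pos[of c] unfolding r_def by auto
    qed
  qed simp
  also have "\<dots> = r t * (\<Prod>c\<in>{Suc t..t+\<beta>}. r c)"
    by (subst prod.atLeast_Suc_atMost) auto
  also have "(\<Prod>c\<in>{Suc t..t+\<beta>}. r c) = (\<Prod>c\<in>{Suc t..t+\<beta>}. real (a - c + t + 1) / real (a - c + t))"
    by (rule prod.cong) (auto simp: r_def c3)
  also have "\<dots> = (\<Prod>k\<in>{1..\<beta>}. real (a - (k + t) + t + 1) / real (a - (k + t) + t))"
    using prod.shift_bounds_cl_nat_ivl[of "\<lambda>c. real (a - c + t + 1) / real (a - c + t)" 1 t \<beta>]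
    by (simp add: add.commute)
  also have "\<dots> = (\<Prod>k\<in>{1..\<beta>}. real (a + 1 - k) / real (a - k))"
    by (rule prod.cong) (use at in auto)
  also have "\<dots> = real a / real (a - \<beta>)" by (rule tele) (use at bpos in \<open>simp add: t_def\<close>)
  also have "r t = real (a + \<beta>) / real a" unfolding r_def using c2 by simp
  finally have main: "(\<Prod>c\<in>{1..a}. real (h c)) =
      (\<Prod>c\<in>{1..a}. real (h' c)) * (real (a + \<beta>) / real a * (real a / real (a - \<beta>)))" .
  have apos: "0 < a" using at unfolding t_def by simp
  have ab: "real (a - \<beta>) = real a - real \<beta>" using at by simp
  have "(\<Prod>s\<in>{1..m}. (real a + real (p' s)) / (real a - real (p' s))) =
        (\<Prod>s\<in>{1..m}. (real a + real (p s)) / (real a - real (p s)))"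
    by (rule prod.cong) (auto simp: pp' t_def)
  then show ?case using main IH apos ab unfolding h_def h'_def
    by (simp add: t_def \<beta>_def)
qed

definition Hs :: "nat set \<Rightarrow> real" where
  "Hs S = (\<Prod>x\<in>S. fact x * (\<Prod>y\<in>{y\<in>S. y < x}. (real x + real y) / (real x - real y)))"

lemma Hs_insert:
  assumes fin: "finite S" and a: "a \<notin> S"
  shows "Hs (insert a S) = Hs S * fact a * (\<Prod>y\<in>S. (real a + real y) / \<bar>real a - real y\<bar>)"
proof -
  define g where "g x y = (real x + real y) / (real x - real y)" for x y :: nat
  define F where "F T x = fact x * (\<Prod>y\<in>{y\<in>T. y < x}. g x y)" for T x
  have HsF: "Hs T = (\<Prod>x\<in>T. F T x)" for T unfolding Hs_def F_def g_def by simp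
  have Fa: "F (insert a S) a = fact a * (\<Prod>y\<in>{y\<in>S. y < a}. g a y)"
    unfolding F_def by (rule arg_cong[where f="\<lambda>z. fact a * z"], rule prod.cong) auto
  have Fx: "F (insert a S) x = F S x * (if a < x then g x a else 1)" if x: "x \<in> S" for x
  proof (cases "a < x")
    case True
    have "{y\<in>insert a S. y < x} = insert a {y\<in>S. y < x}" using True by auto
    then show ?thesis unfolding F_def using True fin a by (simp add: mult.commute mult.left_commute)
  next
    case False
    have "{y\<in>insert a S. y < x} = {y\<in>S. y < x}" using False by auto
    then show ?thesis unfolding F_def using False by simp
  qed
  have "Hs (insert a S) = F (insert a S) a * (\<Prod>x\<in>S. F (insert a S) x)"
    unfolding HsF using fin a by simp
  also have "(\<Prod>x\<in>S. F (insert a S) x) = (\<Prod>x\<in>S. F S x) * (\<Prod>x\<in>S. if a < x then g x a else 1)"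
    by (simp add: Fx prod.distrib)
  finally have 0: "Hs (insert a S) = F (insert a S) a * ((\<Prod>x\<in>S. F S x) * (\<Prod>x\<in>S. if a < x then g x a else 1))" .
  have 2: "(\<Prod>y\<in>{y\<in>S. y < a}. g a y) = (\<Prod>y\<in>S. if y < a then g a y else 1)"
    using fin by (simp add: prod.inter_filter)
  have 1: "Hs (insert a S) = fact a * ((\<Prod>y\<in>S. if y < a then g a y else 1) * (\<Prod>x\<in>S. if a < x then g x a else 1)) * Hs S"
    using 0 2 Fa HsF[of S] by (simp add: mult.assoc mult.left_commute)
  have "(\<Prod>y\<in>S. if y < a then g a y else 1) * (\<Prod>x\<in>S. if a < x then g x a else 1) =
        (\<Prod>y\<in>S. (if y < a then g a y else 1) * (if a < y then g y a else 1))"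
    by (simp add: prod.distrib)
  also have "\<dots> = (\<Prod>y\<in>S. (real a + real y) / \<bar>real a - real y\<bar>)"
  proof (rule prod.cong[OF refl])
    fix y assume "y \<in> S"
    then have "y \<noteq> a" using a by auto
    then show "(if y < a then g a y else 1) * (if a < y then g y a else 1) = (real a + real y) / \<bar>real a - real y\<bar>"
      unfolding g_def by (cases "y < a") (auto simp: abs_if add.commute)
  qed
  finally show ?thesis using 1 by simp
qed

lemma hookprod_Nil: "hookprod [] = 1"
proof -
  have "diagram [] = {}" by (auto simp: Defs.diagram_def)
  then show ?thesis by (simp add: Defs.hookprod_def)
qed

lemma hookprod_Hs: "strict_partition xs \<Longrightarrow> real (hookprod xs) = Hs (set xs)"
proof (induction xs)
  case Nil then show ?case by (simp add: hookprod_Nil Hs_def)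
next
  case (Cons a xs)
  have sx: "strict_partition xs" using Cons.prems by (simp add: Defs.strict_partition_def)
  have lt: "\<forall>y\<in>set xs. y < a" using Cons.prems by (simp add: Defs.strict_partition_def)
  have anot: "a \<notin> set xs" using lt by auto
  have SP: "SPf (part xs) (length xs)" by (rule SPf_part[OF sx])
  have p1: "1 \<le> length xs \<longrightarrow> part xs 1 < a"
    using lt by (cases xs) auto
  have injp: "inj_on (part xs) {1..length xs}"
  proof (rule inj_onI)
    fix i k assume ik: "i \<in> {1..length xs}" "k \<in> {1..length xs}" "part xs i = part xs k"
    show "i = k"
    proof (rule ccontr)
      assume "i \<noteq> k"
      then consider "i < k" | "k < i" by linarith
      then show False
      proof cases
        case 1 then show False using sp_lt[OF sx, of i k] sp_pos[OF sx, of k] ik by auto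
      next
        case 2 then show False using sp_lt[OF sx, of k i] sp_pos[OF sx, of i] ik by auto
      qed
    qed
  qed
  have imgp: "part xs ` {1..length xs} = set xs"
  proof (intro set_eqI iffI)
    fix y assume "y \<in> part xs ` {1..length xs}"
    then show "y \<in> set xs" by (auto simp: Defs.part_def)
  next
    fix y assume "y \<in> set xs"
    then obtain k where k: "k < length xs" "xs ! k = y" by (auto simp: in_set_conv_nth)
    then show "y \<in> part xs ` {1..length xs}" by (intro image_eqI[of _ _ "Suc k"]) (auto simp: Defs.part_def)
  qed
  have "real (hookprod (a#xs)) = (\<Prod>c\<in>{1..a}. real (rowhook a (part xs) c)) * real (hookprod xs)"
    by (simp add: hookprod_Cons')
  also have "(\<Prod>c\<in>{1..a}. real (rowhook a (part xs) c)) =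
         fact a * (\<Prod>s\<in>{1..length xs}. (real a + real (part xs s)) / (real a - real (part xs s)))"
    by (rule rowprod[OF SP p1])
  also have "(\<Prod>s\<in>{1..length xs}. (real a + real (part xs s)) / (real a - real (part xs s))) =
             (\<Prod>y\<in>set xs. (real a + real y) / (real a - real y))"
    by (subst imgp[symmetric], subst prod.reindex[OF injp]) simp
  also have "\<dots> = (\<Prod>y\<in>set xs. (real a + real y) / \<bar>real a - real y\<bar>)"
    by (rule prod.cong) (use lt in auto)
  also have "real (hookprod xs) = Hs (set xs)" by (rule Cons.IH[OF sx])
  finally show ?case using Hs_insert[of "set xs" a] anot by simp
qed


definition minimal :: "(nat \<times> nat) set \<Rightarrow> nat \<times> nat \<Rightarrow> bool" where
  "minimal S b \<longleftrightarrow> b \<in> S \<and> (\<forall>j'. (fst b, j') \<in> S \<longrightarrow> \<not> j' < snd b) \<and> (\<forall>i'. (i', snd b) \<in> S \<longrightarrow> \<not> i' < fst b)"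

lemma ST_finite: "finite S \<Longrightarrow> finite (standard_tableaux S)"
proof -
  assume fin: "finite S"
  have "standard_tableaux S \<subseteq> {f. \<forall>x. (x \<in> S \<longrightarrow> f x \<in> {1..card S}) \<and> (x \<notin> S \<longrightarrow> f x = 0)}"
    unfolding Defs.standard_tableaux_def by (auto dest: bij_betwE)
  then show ?thesis by (rule finite_subset) (rule finite_set_of_finite_funs, use fin in auto)
qed

lemma ST_vals:
  assumes "T \<in> standard_tableaux S" "c \<in> S"
  shows "1 \<le> T c" "T c \<le> card S"
  using assms unfolding Defs.standard_tableaux_def by (auto dest: bij_betwE)

lemma ST_fiber_empty:
  assumes "T \<in> standard_tableaux S" "b \<in> S" "T b = 1" "finite S"
  shows "minimal S b"
proof -
  obtain i j where b: "b = (i,j)" by (cases b)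
  have row: "\<not> j' < j" if "(i, j') \<in> S" for j'
  proof
    assume "j' < j"
    then have "T (i,j') < T (i,j)" using assms(1,2) that b unfolding Defs.standard_tableaux_def by blast
    then show False using ST_vals(1)[OF assms(1) that] assms(3) b by simp
  qed
  have col: "\<not> i' < i" if "(i', j) \<in> S" for i'
  proof
    assume "i' < i"
    then have "T (i',j) < T (i,j)" using assms(1,2) that b unfolding Defs.standard_tableaux_def by blast
    then show False using ST_vals(1)[OF assms(1) that] assms(3) b by simp
  qed
  show ?thesis unfolding minimal_def using row col b assms(2) by auto
qed

lemma ST_bij: "T \<in> standard_tableaux S \<Longrightarrow> bij_betw T S {1..card S}"
  and ST_zero: "T \<in> standard_tableaux S \<Longrightarrow> c \<notin> S \<Longrightarrow> T c = 0"
  and ST_row: "T \<in> standard_tableaux S \<Longrightarrow> (i, j) \<in> S \<Longrightarrow> (i, j') \<in> S \<Longrightarrow> j < j' \<Longrightarrow> T (i, j) < T (i, j')"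
  and ST_col: "T \<in> standard_tableaux S \<Longrightarrow> (i, j) \<in> S \<Longrightarrow> (i', j) \<in> S \<Longrightarrow> i < i' \<Longrightarrow> T (i, j) < T (i', j)"
  unfolding Defs.standard_tableaux_def by blast+

lemma ST_I:
  assumes "bij_betw T S {1..card S}" "\<And>c. c \<notin> S \<Longrightarrow> T c = 0"
    "\<And>i j j'. (i, j) \<in> S \<Longrightarrow> (i, j') \<in> S \<Longrightarrow> j < j' \<Longrightarrow> T (i, j) < T (i, j')"
    "\<And>i i' j. (i, j) \<in> S \<Longrightarrow> (i', j) \<in> S \<Longrightarrow> i < i' \<Longrightarrow> T (i, j) < T (i', j)"
  shows "T \<in> standard_tableaux S"
  unfolding Defs.standard_tableaux_def using assms by blast

lemma ST_fiber_card:
  assumes fin: "finite S" and mb: "minimal S b"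
  shows "card {T \<in> standard_tableaux S. T b = 1} = card (standard_tableaux (S - {b}))"
proof -
  have bS: "b \<in> S" using mb by (simp add: minimal_def)
  define n where "n = card S"
  have n1: "1 \<le> n" using fin bS unfolding n_def by (metis One_nat_def Suc_leI card_gt_0_iff empty_iff)
  have cSb: "card (S - {b}) = n - 1" using fin bS unfolding n_def by simp
  define down where "down T = (\<lambda>c. if c \<in> S - {b} then T c - 1 else (0::nat))" for T :: "nat \<times> nat \<Rightarrow> nat"
  define up where "up T = (\<lambda>c. if c = b then 1 else if c \<in> S then T c + 1 else (0::nat))" for T :: "nat \<times> nat \<Rightarrow> nat"
  show ?thesis
  proof (rule bij_betw_same_card[of down], rule bij_betw_byWitness[where f' = up])
    show "\<forall>T\<in>{T \<in> standard_tableaux S. T b = 1}. up (down T) = T"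
    proof
      fix T assume T: "T \<in> {T \<in> standard_tableaux S. T b = 1}"
      show "up (down T) = T"
      proof
        fix c
        have z: "c \<notin> S \<Longrightarrow> T c = 0" using T by (intro ST_zero) auto
        have v: "c \<in> S \<Longrightarrow> 1 \<le> T c" using T by (intro ST_vals(1)) auto
        show "up (down T) c = T c"
        proof (cases "c \<in> S")
          case True then show ?thesis using T v[OF True] unfolding up_def down_def by auto
        next
          case False then show ?thesis using z[OF False] False bS unfolding up_def down_def by auto
        qed
      qed
    qed
    show "\<forall>T\<in>standard_tableaux (S - {b}). down (up T) = T"
    proof
      fix T assume T: "T \<in> standard_tableaux (S - {b})"
      show "down (up T) = T"
      proof
        fix c
        have z: "c \<notin> S - {b} \<Longrightarrow> T c = 0" by (rule ST_zero[OF T])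
        show "down (up T) c = T c"
        proof (cases "c \<in> S - {b}")
          case True then show ?thesis unfolding up_def down_def by simp
        next
          case False then show ?thesis using z[OF False] unfolding up_def down_def by simp
        qed
      qed
    qed
    show "down ` {T \<in> standard_tableaux S. T b = 1} \<subseteq> standard_tableaux (S - {b})"
    proof
      fix T' assume "T' \<in> down ` {T \<in> standard_tableaux S. T b = 1}"
      then obtain T where T: "T \<in> standard_tableaux S" "T b = 1" and T': "T' = down T" by auto
      have bij: "bij_betw T S {1..n}" using ST_bij[OF T(1)] unfolding n_def .
      have injT: "inj_on T S" using bij by (rule bij_betw_imp_inj_on)
      have imT: "T ` S = {1..n}" using bij by (rule bij_betw_imp_surj_on)
      have ge2: "2 \<le> T c" if "c \<in> S - {b}" for c
      proof -
        have "T c \<noteq> T b" using injT that bS by (metis DiffE inj_onD singletonI)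
        then show ?thesis using ST_vals(1)[OF T(1), of c] that T(2) by simp
      qed
      have inj: "inj_on T' (S - {b})"
      proof (rule inj_onI)
        fix x y assume xy: "x \<in> S - {b}" "y \<in> S - {b}" "T' x = T' y"
        then have "T x = T y" using ge2[OF xy(1)] ge2[OF xy(2)] unfolding T' down_def by simp
        then show "x = y" using injT xy by (meson DiffD1 inj_onD)
      qed
      have img: "T ` (S - {b}) = {1..n} - {1}"
        using inj_on_image_set_diff[OF injT, of "S - {b}" "{b}"] imT bS T(2) by auto
      have "T' ` (S - {b}) = (\<lambda>v. v - 1) ` (T ` (S - {b}))"
        unfolding T' down_def by (auto simp: image_image)
      also have "\<dots> = {1..n - 1}"
      proof (intro set_eqI iffI)
        fix v assume "v \<in> (\<lambda>v. v - 1) ` (T ` (S - {b}))"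
        then show "v \<in> {1..n - 1}" unfolding img by auto
      next
        fix v assume "v \<in> {1..n - 1}"
        then have "v + 1 \<in> {1..n} - {1}" by auto
        then show "v \<in> (\<lambda>v. v - 1) ` (T ` (S - {b}))" unfolding img by (intro image_eqI[of _ _ "v+1"]) auto
      qed
      finally have bij': "bij_betw T' (S - {b}) {1..card (S - {b})}"
        unfolding bij_betw_def using inj cSb by simp
      show "T' \<in> standard_tableaux (S - {b})"
      proof (rule ST_I[OF bij'])
        fix c assume c: "c \<notin> S - {b}" show "T' c = 0" using c by (simp add: T' down_def del: Diff_iff)
      next
        fix i j j' assume that: "(i, j) \<in> S - {b}" "(i, j') \<in> S - {b}" "j < j'"
        have "T (i,j) < T (i,j')" by (rule ST_row[OF T(1)]) (use that in auto)
        then show "T' (i, j) < T' (i, j')" using ge2[OF that(1)] unfolding T' down_def using that by simp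
      next
        fix i i' j assume that: "(i, j) \<in> S - {b}" "(i', j) \<in> S - {b}" "i < i'"
        have "T (i,j) < T (i',j)" by (rule ST_col[OF T(1)]) (use that in auto)
        then show "T' (i, j) < T' (i', j)" using ge2[OF that(1)] unfolding T' down_def using that by simp
      qed
    qed
    show "up ` standard_tableaux (S - {b}) \<subseteq> {T \<in> standard_tableaux S. T b = 1}"
    proof
      fix T assume "T \<in> up ` standard_tableaux (S - {b})"
      then obtain T' where T': "T' \<in> standard_tableaux (S - {b})" and T: "T = up T'" by auto
      have bij': "bij_betw T' (S - {b}) {1..n - 1}" using ST_bij[OF T'] cSb by simp
      have vals: "1 \<le> T' c" "T' c \<le> n - 1" if "c \<in> S - {b}" for c
        using bij_betwE[OF bij'] that by auto
      have Tb: "T b = 1" by (simp add: T up_def)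
      have Tc: "T c = T' c + 1" if "c \<in> S" "c \<noteq> b" for c using that by (simp add: T up_def)
      have inj: "inj_on T S"
      proof (rule inj_onI)
        fix x y assume xy: "x \<in> S" "y \<in> S" "T x = T y"
        show "x = y"
        proof (cases "x = b")
          case True
          show ?thesis
          proof (rule ccontr)
            assume "x \<noteq> y"
            then have "T y = T' y + 1" "1 \<le> T' y" using True xy Tc vals by auto
            then show False using xy True Tb by simp
          qed
        next
          case False
          show ?thesis
          proof (cases "y = b")
            case True
            have "T x = T' x + 1" "1 \<le> T' x" using False xy Tc vals by auto
            then show ?thesis using xy True Tb by simp
          next
            case False2: False
            then have "T' x = T' y" using xy False Tc by simp
            then show ?thesis using False False2 xy bij_betw_imp_inj_on[OF bij'] by (meson DiffI inj_onD singletonD)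
          qed
        qed
      qed
      have img: "T ` S = {1..n}"
      proof (intro set_eqI iffI)
        fix v assume "v \<in> T ` S"
        then obtain c where c: "c \<in> S" "v = T c" by auto
        then show "v \<in> {1..n}" using vals[of c] n1 unfolding T up_def by (cases "c = b") auto
      next
        fix v assume v: "v \<in> {1..n}"
        show "v \<in> T ` S"
        proof (cases "v = 1")
          case True then show ?thesis using bS unfolding T up_def by (intro image_eqI[of _ _ b]) auto
        next
          case False
          then have "v - 1 \<in> {1..n-1}" using v by auto
          then obtain c where c: "c \<in> S - {b}" "T' c = v - 1"
            using bij_betw_imp_surj_on[OF bij'] by (metis imageE)
          then show ?thesis using False v unfolding T up_def by (intro image_eqI[of _ _ c]) auto
        qed
      qed
      have "T \<in> standard_tableaux S"
      proof (rule ST_I)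
        show "bij_betw T S {1..card S}" unfolding bij_betw_def using inj img n_def by simp
      next
        fix c assume "c \<notin> S" then show "T c = 0" using bS unfolding T up_def by auto
      next
        fix i j j' assume that: "(i, j) \<in> S" "(i, j') \<in> S" "j < j'"
        have nb: "(i, j') \<noteq> b" using mb that unfolding minimal_def by auto
        moreover have "(i,j) \<noteq> b \<Longrightarrow> T' (i,j) < T' (i,j')"
          by (rule ST_row[OF T']) (use that nb in auto)
        ultimately show "T (i, j) < T (i, j')" unfolding T up_def using that vals[of "(i,j')"] by auto
      next
        fix i i' j assume that: "(i, j) \<in> S" "(i', j) \<in> S" "i < i'"
        have nb: "(i', j) \<noteq> b" using mb that unfolding minimal_def by auto
        moreover have "(i,j) \<noteq> b \<Longrightarrow> T' (i,j) < T' (i',j)"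
          by (rule ST_col[OF T']) (use that nb in auto)
        ultimately show "T (i, j) < T (i', j)" unfolding T up_def using that vals[of "(i',j)"] by auto
      qed
      then show "T \<in> {T \<in> standard_tableaux S. T b = 1}" by (simp add: T up_def)
    qed
  qed
qed

lemma ST_rec:
  assumes fin: "finite S" and ne: "S \<noteq> {}"
  shows "card (standard_tableaux S) = (\<Sum>b\<in>{b. minimal S b}. card (standard_tableaux (S - {b})))"
proof -
  have cover: "standard_tableaux S = (\<Union>b\<in>S. {T \<in> standard_tableaux S. T b = 1})"
  proof (intro set_eqI iffI)
    fix T assume T: "T \<in> standard_tableaux S"
    have "1 \<in> {1..card S}" using fin ne by (simp add: Suc_leI card_gt_0_iff)
    moreover have "T ` S = {1..card S}" using T unfolding Defs.standard_tableaux_def bij_betw_def by blast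
    ultimately obtain b where "b \<in> S" "T b = 1" by (metis imageE)
    then show "T \<in> (\<Union>b\<in>S. {T \<in> standard_tableaux S. T b = 1})" using T by blast
  qed blast
  have inj: "inj_on T S" if "T \<in> standard_tableaux S" for T
    using that unfolding Defs.standard_tableaux_def bij_betw_def by blast
  have "card (standard_tableaux S) = card (\<Union>b\<in>S. {T \<in> standard_tableaux S. T b = 1})"
    using cover by (rule arg_cong)
  also have "\<dots> = (\<Sum>b\<in>S. card {T \<in> standard_tableaux S. T b = 1})"
  proof (rule card_UN_disjoint)
    show "finite S" by fact
    show "\<forall>b\<in>S. finite {T \<in> standard_tableaux S. T b = 1}" using ST_finite[OF fin] by auto
    show "\<forall>b\<in>S. \<forall>b'\<in>S. b \<noteq> b' \<longrightarrow> {T \<in> standard_tableaux S. T b = 1} \<inter> {T \<in> standard_tableaux S. T b' = 1} = {}"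
    proof (intro ballI impI)
      fix b b' assume bb: "b \<in> S" "b' \<in> S" "b \<noteq> b'"
      show "{T \<in> standard_tableaux S. T b = 1} \<inter> {T \<in> standard_tableaux S. T b' = 1} = {}"
      proof (rule equals0I)
        fix T assume "T \<in> {T \<in> standard_tableaux S. T b = 1} \<inter> {T \<in> standard_tableaux S. T b' = 1}"
        then have "T \<in> standard_tableaux S" "T b = T b'" by auto
        then show False using inj bb by (meson inj_onD)
      qed
    qed
  qed
  also have "\<dots> = (\<Sum>b\<in>{b. minimal S b}. card {T \<in> standard_tableaux S. T b = 1})"
  proof (rule sum.mono_neutral_right)
    show "{b. minimal S b} \<subseteq> S" by (auto simp: minimal_def)
    show "\<forall>b\<in>S - {b. minimal S b}. card {T \<in> standard_tableaux S. T b = 1} = 0"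
    proof
      fix b assume b: "b \<in> S - {b. minimal S b}"
      have "{T \<in> standard_tableaux S. T b = 1} = {}" using ST_fiber_empty[of _ S b] fin b by blast
      then show "card {T \<in> standard_tableaux S. T b = 1} = 0" by (simp only: card.empty)
    qed
  qed (use fin in auto)
  also have "\<dots> = (\<Sum>b\<in>{b. minimal S b}. card (standard_tableaux (S - {b})))"
    by (rule sum.cong[OF refl], rule ST_fiber_card[OF fin]) simp
  finally show ?thesis .
qed


definition addbox :: "nat list \<Rightarrow> nat \<Rightarrow> nat list" where
  "addbox mu i = (if i \<le> length mu then mu[i - 1 := mu ! (i - 1) + 1] else mu @ [1])"

definition Iset :: "nat list \<Rightarrow> nat set" where
  "Iset mu = {i. 1 \<le> i \<and> i \<le> Suc (length mu) \<and> strict_partition (addbox mu i)}"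

lemma Iset_finite: "finite (Iset mu)"
  by (rule finite_subset[of _ "{1..Suc (length mu)}"]) (auto simp: Iset_def)

lemma part_addbox:
  assumes "1 \<le> i" "i \<le> Suc (length mu)"
  shows "part (addbox mu i) = (part mu)(i := Suc (part mu i))"
proof
  fix k show "part (addbox mu i) k = ((part mu)(i := Suc (part mu i))) k"
  proof (cases "i \<le> length mu")
    case True
    then show ?thesis using assms
      by (cases "k = i") (auto simp: addbox_def Defs.part_def nth_list_update)
  next
    case False
    then have i: "i = Suc (length mu)" using assms by simp
    show ?thesis using i
      by (cases "k = i") (auto simp: addbox_def Defs.part_def nth_append)
  qed
qed

lemma length_addbox: "1 \<le> i \<Longrightarrow> i \<le> Suc (length mu) \<Longrightarrow> length (addbox mu i) = max (length mu) i"
  by (auto simp: addbox_def)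

lemma diagram_addbox:
  assumes "1 \<le> i" "i \<le> Suc (length mu)"
  shows "diagram (addbox mu i) = insert (i, i + part mu i + 1) (diagram mu)"
  using assms unfolding diagram_alt part_addbox[OF assms] by (auto split: if_splits)

lemma valid_addbox:
  assumes sm: "strict_partition mu" and i: "1 \<le> i" "i \<le> Suc (length mu)"
    and gap: "2 \<le> i \<longrightarrow> part mu i + 2 \<le> part mu (i - 1)"
  shows "strict_partition (addbox mu i)"
proof -
  have P: "part (addbox mu i) = (part mu)(i := Suc (part mu i))" by (rule part_addbox[OF i])
  have L: "length (addbox mu i) = max (length mu) i" by (rule length_addbox[OF i])
  show ?thesis unfolding sp_iff P L
  proof (intro conjI allI impI)
    fix k assume k: "1 \<le> k \<and> k \<le> max (length mu) i"
    show "0 < ((part mu)(i := Suc (part mu i))) k"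
    proof (cases "k = i")
      case False then have "k \<le> length mu" using k i(2) by (auto simp: max_def split: if_splits)
      then show ?thesis using False sp_pos[OF sm, of k] k by simp
    qed simp
  next
    fix k assume k: "1 \<le> k \<and> Suc k \<le> max (length mu) i"
    show "((part mu)(i := Suc (part mu i))) (Suc k) < ((part mu)(i := Suc (part mu i))) k"
    proof (cases "Suc k = i")
      case True
      then show ?thesis using gap k by auto
    next
      case False
      show ?thesis
      proof (cases "k = i")
        case True
        have "part mu (Suc k) < part mu k \<or> part mu (Suc k) = 0" using sp_lt[OF sm, of k "Suc k"] k by simp
        then show ?thesis using True by auto
      next
        case False2: False
        then have "Suc k \<le> length mu" using k False i(2) by (auto simp: max_def split: if_splits)
        then show ?thesis using sp_dec[OF sm, of k] k False False2 by simp
      qed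
    qed
  qed
qed

lemma contains_trans: "contains a b \<Longrightarrow> contains b c \<Longrightarrow> contains a c"
  unfolding Defs.contains_def by (meson le_trans)

lemma contains_addbox: "1 \<le> i \<Longrightarrow> i \<le> Suc (length mu) \<Longrightarrow> contains (addbox mu i) mu"
  unfolding Defs.contains_def by (simp add: part_addbox)

lemma contains_addbox_iff:
  "1 \<le> i \<Longrightarrow> i \<le> Suc (length mu) \<Longrightarrow> contains lam (addbox mu i) \<longleftrightarrow> contains lam mu \<and> Suc (part mu i) \<le> part lam i"
proof -
  assume i: "1 \<le> i" "i \<le> Suc (length mu)"
  show ?thesis
  proof
    assume H: "contains lam (addbox mu i)"
    have "part (addbox mu i) k \<le> part lam k" for k using H unfolding Defs.contains_def by simp
    then have "((part mu)(i := Suc (part mu i))) k \<le> part lam k" for k unfolding part_addbox[OF i] .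
    then have a: "Suc (part mu i) \<le> part lam i" by (metis fun_upd_same)
    have b: "part mu k \<le> part lam k" for k
    proof (cases "k = i")
      case True then show ?thesis using a by simp
    next
      case False then show ?thesis using \<open>\<And>k. ((part mu)(i := Suc (part mu i))) k \<le> part lam k\<close>[of k] by simp
    qed
    show "contains lam mu \<and> Suc (part mu i) \<le> part lam i" unfolding Defs.contains_def using a b by simp
  next
    assume H: "contains lam mu \<and> Suc (part mu i) \<le> part lam i"
    show "contains lam (addbox mu i)" unfolding Defs.contains_def part_addbox[OF i]
      using H unfolding Defs.contains_def by simp
  qed
qed

lemma minimal_skew:
  assumes sl: "strict_partition lam" and sm: "strict_partition mu" and c: "contains lam mu"
  shows "{b. minimal (skew lam mu) b} = (\<lambda>i. (i, i + part mu i + 1)) ` {i \<in> Iset mu. contains lam (addbox mu i)}"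
proof (intro set_eqI iffI)
  fix b assume "b \<in> {b. minimal (skew lam mu) b}"
  then have mb: "minimal (skew lam mu) b" by simp
  obtain i j where b: "b = (i, j)" by (cases b)
  have bs: "(i, j) \<in> skew lam mu" using mb b unfolding minimal_def by simp
  have inL: "1 \<le> i" "i < j" "j \<le> i + part lam i" and notM: "\<not> j \<le> i + part mu i"
    using bs unfolding Defs.skew_def diagram_alt by auto
  have row: "\<And>j'. (i, j') \<in> skew lam mu \<Longrightarrow> \<not> j' < j" using mb b unfolding minimal_def by simp
  have col: "\<And>i'. (i', j) \<in> skew lam mu \<Longrightarrow> \<not> i' < i" using mb b unfolding minimal_def by simp
  have j: "j = i + part mu i + 1"
  proof (rule ccontr)
    assume "j \<noteq> i + part mu i + 1"
    then have "i + part mu i + 1 < j" using notM by simp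
    then have "(i, j - 1) \<in> skew lam mu" using inL unfolding Defs.skew_def diagram_alt by auto
    then show False using row[of "j - 1"] inL by simp
  qed
  have lm: "Suc (part mu i) \<le> part lam i" using inL j by simp
  have gap: "2 \<le> i \<longrightarrow> part mu i + 2 \<le> part mu (i - 1)"
  proof
    assume i2: "2 \<le> i"
    have "part lam i < part lam (i - 1) \<or> part lam i = 0" using sp_lt[OF sl, of "i - 1" i] i2 by simp
    then have "part lam i < part lam (i - 1)" using lm by auto
    then have "(i - 1, j) \<in> diagram lam" using i2 j lm unfolding diagram_alt by auto
    moreover have "(i - 1, j) \<notin> skew lam mu" using col[of "i - 1"] i2 by auto
    ultimately have "(i - 1, j) \<in> diagram mu" unfolding Defs.skew_def by auto
    then show "part mu i + 2 \<le> part mu (i - 1)" using j i2 unfolding diagram_alt by auto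
  qed
  have ilen: "i \<le> Suc (length mu)"
  proof (rule ccontr)
    assume "\<not> i \<le> Suc (length mu)"
    then have "2 \<le> i" "length mu < i - 1" by auto
    then show False using gap part_beyond[of mu "i - 1"] by simp
  qed
  have "i \<in> Iset mu" unfolding Iset_def using valid_addbox[OF sm inL(1) ilen gap] inL ilen by simp
  moreover have "contains lam (addbox mu i)" using contains_addbox_iff[OF inL(1) ilen] c lm by simp
  ultimately show "b \<in> (\<lambda>i. (i, i + part mu i + 1)) ` {i \<in> Iset mu. contains lam (addbox mu i)}"
    using b j by auto
next
  fix b assume "b \<in> (\<lambda>i. (i, i + part mu i + 1)) ` {i \<in> Iset mu. contains lam (addbox mu i)}"
  then obtain i where i: "i \<in> Iset mu" "contains lam (addbox mu i)" and b: "b = (i, i + part mu i + 1)" by auto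
  have i1: "1 \<le> i" "i \<le> Suc (length mu)" and sa: "strict_partition (addbox mu i)"
    using i unfolding Iset_def by auto
  have lm: "Suc (part mu i) \<le> part lam i" using contains_addbox_iff[OF i1] i by simp
  have gap: "part mu i + 2 \<le> part mu (i - 1)" if "2 \<le> i"
  proof -
    have "Suc (i - 1) \<le> length (addbox mu i)" using i1 length_addbox[OF i1] that by simp
    then have "part (addbox mu i) i < part (addbox mu i) (i - 1)"
      using sp_dec[OF sa, of "i - 1"] that by simp
    moreover have "i - 1 \<noteq> i" using that by simp
    ultimately show ?thesis using part_addbox[OF i1] that by simp
  qed
  have bin: "b \<in> skew lam mu" using b i1 lm unfolding Defs.skew_def diagram_alt by auto
  show "b \<in> {b. minimal (skew lam mu) b}"
    unfolding minimal_def
  proof (intro CollectI conjI allI impI bin)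
    fix j' assume "(fst b, j') \<in> skew lam mu"
    then show "\<not> j' < snd b" using b unfolding Defs.skew_def diagram_alt by auto
  next
    fix i' assume i': "(i', snd b) \<in> skew lam mu"
    show "\<not> i' < fst b"
    proof
      assume lt: "i' < fst b"
      have i'1: "1 \<le> i'" and nm: "\<not> i + part mu i + 1 \<le> i' + part mu i'"
        using i' b unfolding Defs.skew_def diagram_alt by auto
      have i2: "2 \<le> i" using lt i'1 b by simp
      have il: "i - 1 \<le> length mu"
      proof (rule ccontr)
        assume "\<not> i - 1 \<le> length mu"
        then have "part mu (i - 1) = 0" by (simp add: part_beyond)
        then show False using gap[OF i2] by simp
      qed
      have "i' \<le> i - 1" using lt b by simp
      then have "part mu (i - 1) + (i - 1 - i') \<le> part mu i'"
        using sp_gap[OF sm i'1 _ il] by simp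
      then show False using nm gap[OF i2] lt b by simp
    qed
  qed
qed

lemma skew_nonempty:
  assumes c: "contains lam mu" and sz: "psize mu < psize lam"
  shows "skew lam mu \<noteq> {}"
proof
  assume e: "skew lam mu = {}"
  have le: "part lam i \<le> part mu i" for i
  proof (rule ccontr)
    assume "\<not> part lam i \<le> part mu i"
    then have "0 < part lam i" by simp
    then have "1 \<le> i" by (cases i) auto
    then have "(i, i + part lam i) \<in> skew lam mu" using \<open>\<not> part lam i \<le> part mu i\<close>
      unfolding Defs.skew_def diagram_alt by auto
    then show False using e by simp
  qed
  define N where "N = max (length lam) (length mu)"
  have "psize lam = (\<Sum>i=1..N. part lam i)" by (rule psize_part_upto) (simp add: N_def)
  also have "\<dots> \<le> (\<Sum>i=1..N. part mu i)" by (rule sum_mono) (rule le)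
  also have "\<dots> = psize mu" by (rule psize_part_upto[symmetric]) (simp add: N_def)
  finally show False using sz by simp
qed

lemma syt_rec:
  assumes sl: "strict_partition lam" and sm: "strict_partition mu" and c: "contains lam mu"
    and sz: "psize mu < psize lam"
  shows "num_syt lam mu = (\<Sum>i\<in>{i \<in> Iset mu. contains lam (addbox mu i)}. num_syt lam (addbox mu i))"
proof -
  have fin: "finite (skew lam mu)" unfolding Defs.skew_def by simp
  have "num_syt lam mu = (\<Sum>b\<in>{b. minimal (skew lam mu) b}. card (standard_tableaux (skew lam mu - {b})))"
    unfolding Defs.num_syt_def by (rule ST_rec[OF fin skew_nonempty[OF c sz]])
  also have "\<dots> = (\<Sum>i\<in>{i \<in> Iset mu. contains lam (addbox mu i)}. card (standard_tableaux (skew lam mu - {(i, i + part mu i + 1)})))"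
    unfolding minimal_skew[OF sl sm c] by (subst sum.reindex) (auto simp: inj_on_def)
  also have "\<dots> = (\<Sum>i\<in>{i \<in> Iset mu. contains lam (addbox mu i)}. num_syt lam (addbox mu i))"
  proof (rule sum.cong[OF refl])
    fix i assume "i \<in> {i \<in> Iset mu. contains lam (addbox mu i)}"
    then have i1: "1 \<le> i" "i \<le> Suc (length mu)" unfolding Iset_def by auto
    have "skew lam mu - {(i, i + part mu i + 1)} = skew lam (addbox mu i)"
      unfolding Defs.skew_def diagram_addbox[OF i1] by auto
    then show "card (standard_tableaux (skew lam mu - {(i, i + part mu i + 1)})) = num_syt lam (addbox mu i)"
      by (simp add: Defs.num_syt_def)
  qed
  finally show ?thesis .
qed




definition W :: "nat list \<Rightarrow> nat list \<Rightarrow> real" where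
  "W lam mu = (2::real) powi (int (psize lam) - int (plen lam) - int (psize mu) + int (plen mu))
              * real (hookprod mu) / real (hookprod lam)"

definition Cc :: "nat list \<Rightarrow> real" where
  "Cc lam = (\<Sum>b\<in>diagram lam. (real_of_int (content b) gchoose 2))"

lemma sp_distinct: "strict_partition xs \<Longrightarrow> distinct xs"
  unfolding Defs.strict_partition_def distinct_conv_nth sorted_wrt_iff_nth_less
  by (metis less_irrefl nat_neq_iff)

lemma part_bij:
  assumes sx: "strict_partition xs"
  shows "inj_on (part xs) {1..length xs}" "part xs ` {1..length xs} = set xs"
proof -
  show "inj_on (part xs) {1..length xs}"
  proof (rule inj_onI)
    fix i k assume ik: "i \<in> {1..length xs}" "k \<in> {1..length xs}" "part xs i = part xs k"
    show "i = k"
    proof (rule ccontr)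
      assume "i \<noteq> k"
      then consider "i < k" | "k < i" by linarith
      then show False
      proof cases
        case 1 then show False using sp_lt[OF sx, of i k] sp_pos[OF sx, of k] ik by auto
      next
        case 2 then show False using sp_lt[OF sx, of k i] sp_pos[OF sx, of i] ik by auto
      qed
    qed
  qed
  show "part xs ` {1..length xs} = set xs"
  proof (intro set_eqI iffI)
    fix y assume "y \<in> part xs ` {1..length xs}"
    then obtain k where k: "1 \<le> k" "k \<le> length xs" "y = part xs k" by auto
    then have "y = xs ! (k - 1)" by (simp add: Defs.part_def)
    then show "y \<in> set xs" using k by simp
  next
    fix y assume "y \<in> set xs"
    then obtain k where k: "k < length xs" "xs ! k = y" by (auto simp: in_set_conv_nth)
    then show "y \<in> part xs ` {1..length xs}" by (intro image_eqI[of _ _ "Suc k"]) (auto simp: Defs.part_def)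
  qed
qed

lemma Iset_iff:
  assumes sm: "strict_partition mu" and i: "1 \<le> i" "i \<le> Suc (length mu)"
  shows "i \<in> Iset mu \<longleftrightarrow> (2 \<le> i \<longrightarrow> part mu i + 2 \<le> part mu (i - 1))"
proof
  assume iI: "i \<in> Iset mu"
  then have sa: "strict_partition (addbox mu i)" unfolding Iset_def by simp
  show "2 \<le> i \<longrightarrow> part mu i + 2 \<le> part mu (i - 1)"
  proof
    assume i2: "2 \<le> i"
    have "Suc (i - 1) \<le> length (addbox mu i)" using i length_addbox[OF i] i2 by simp
    then have "part (addbox mu i) i < part (addbox mu i) (i - 1)"
      using sp_dec[OF sa, of "i - 1"] i2 by simp
    moreover have "i - 1 \<noteq> i" using i2 by simp
    ultimately show "part mu i + 2 \<le> part mu (i - 1)" using part_addbox[OF i] i2 by simp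
  qed
next
  assume "2 \<le> i \<longrightarrow> part mu i + 2 \<le> part mu (i - 1)"
  then show "i \<in> Iset mu" unfolding Iset_def using valid_addbox[OF sm i] i by simp
qed

lemma Hs_pos: "finite S \<Longrightarrow> 0 < Hs S"
  unfolding Hs_def by (intro prod_pos mult_pos_pos prod_pos divide_pos_pos) auto

lemma psize_addbox:
  assumes i: "1 \<le> i" "i \<le> Suc (length mu)"
  shows "psize (addbox mu i) = psize mu + 1"
proof -
  define N where "N = Suc (length mu)"
  have iN: "i \<in> {1..N}" using i unfolding N_def by simp
  have "psize (addbox mu i) = (\<Sum>k=1..N. part (addbox mu i) k)"
    by (rule psize_part_upto) (use length_addbox[OF i] i in \<open>simp add: N_def\<close>)
  also have "\<dots> = (\<Sum>k=1..N. ((part mu)(i := Suc (part mu i))) k)" by (simp add: part_addbox[OF i])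
  also have "\<dots> = Suc (part mu i) + (\<Sum>k\<in>{1..N} - {i}. part mu k)"
    by (subst sum.remove[OF _ iN]) (auto intro!: sum.cong)
  also have "(\<Sum>k=1..N. part mu k) = part mu i + (\<Sum>k\<in>{1..N} - {i}. part mu k)"
    by (rule sum.remove[OF _ iN]) simp
  moreover have "(\<Sum>k=1..N. part mu k) = psize mu" by (rule psize_part_upto[symmetric]) (simp add: N_def)
  ultimately show ?thesis by simp
qed

lemma Cc_addbox:
  assumes i: "1 \<le> i" "i \<le> Suc (length mu)"
  shows "Cc (addbox mu i) - Cc mu = QQ (part mu i) / 2"
proof -
  have nb: "(i, i + part mu i + 1) \<notin> diagram mu" by (auto simp: diagram_alt)
  have "Cc (addbox mu i) = (real_of_int (content (i, i + part mu i + 1)) gchoose 2) + Cc mu"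
    unfolding Cc_def diagram_addbox[OF i] using nb by simp
  moreover have "real_of_int (content (i, i + part mu i + 1)) = real (part mu i) + 1"
    by (simp add: Defs.content_def)
  moreover have "(real (part mu i) + 1) gchoose 2 = QQ (part mu i) / 2"
    by (simp add: gbinomial_prod_rev numeral_2_eq_2 QQ_def)
  ultimately show ?thesis by simp
qed

lemma set_addbox_old:
  assumes sm: "strict_partition mu" and i: "1 \<le> i" "i \<le> length mu"
  shows "set (addbox mu i) = insert (Suc (part mu i)) (set mu - {part mu i})"
proof -
  have "set (addbox mu i) = set (mu[i - 1 := mu ! (i - 1) + 1])" using i by (simp add: addbox_def)
  also have "\<dots> = insert (mu ! (i - 1) + 1) (set mu - {mu ! (i - 1)})"
    by (rule set_update_distinct) (use sp_distinct[OF sm] i in auto)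
  moreover have "part mu i = mu ! (i - 1)" using i by (simp add: Defs.part_def)
  ultimately show ?thesis by simp
qed

lemma set_addbox_new: "set (addbox mu (Suc (length mu))) = insert 1 (set mu)"
  by (simp add: addbox_def)

lemma W_old:
  assumes sm: "strict_partition mu" and iI: "i \<in> Iset mu" and il: "i \<le> length mu"
  shows "W (addbox mu i) mu = Aw (set mu) (part mu i)"
proof -
  have i: "1 \<le> i" "i \<le> Suc (length mu)" using iI unfolding Iset_def by auto
  have sa: "strict_partition (addbox mu i)" using iI unfolding Iset_def by simp
  define x where "x = part mu i"
  define S where "S = set mu - {x}"
  have xin: "x \<in> set mu" using part_bij(2)[OF sm] i il unfolding x_def by auto
  have X: "set mu = insert x S" unfolding S_def using xin by auto
  have xS: "x \<notin> S" unfolding S_def by simp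
  have x1: "Suc x \<notin> set mu"
  proof
    assume "Suc x \<in> set mu"
    then have "Suc x \<in> part mu ` {1..length mu}" using part_bij(2)[OF sm] by simp
    then obtain k where k: "k \<in> {1..length mu}" "part mu k = Suc x" by (metis imageE)
    consider "k = i" | "i < k" | "k < i" by linarith
    then show False
    proof cases
      case 1 then show False using k x_def by simp
    next
      case 2 then show False using sp_lt[OF sm, of i k] k i x_def by auto
    next
      case 3
      then have i2: "2 \<le> i" using k by simp
      have "part mu (i - 1) \<le> part mu k" using sp_le[OF sm, of k "i - 1"] k 3 by simp
      then show False using Iset_iff[OF sm i] iI i2 k x_def by simp
    qed
  qed
  have x1S: "Suc x \<notin> S" using x1 unfolding S_def by simp
  have fin: "finite S" unfolding S_def by simp
  have Y: "set (addbox mu i) = insert (Suc x) S" using set_addbox_old[OF sm i(1) il] unfolding S_def x_def by simp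
  have exp: "int (psize (addbox mu i)) - int (plen (addbox mu i)) - int (psize mu) + int (plen mu) = 1"
    using psize_addbox[OF i] length_addbox[OF i] il by (simp add: Defs.plen_def)
  have "W (addbox mu i) mu = 2 * (Hs (insert x S) / Hs (insert (Suc x) S))"
    unfolding W_def exp using hookprod_Hs[OF sm] hookprod_Hs[OF sa] X Y by simp
  also have "Hs (insert x S) = Hs S * fact x * (\<Prod>y\<in>S. (real x + real y) / \<bar>real x - real y\<bar>)"
    by (rule Hs_insert[OF fin xS])
  also have "Hs (insert (Suc x) S) = Hs S * fact (Suc x) * (\<Prod>y\<in>S. (real (Suc x) + real y) / \<bar>real (Suc x) - real y\<bar>)"
    by (rule Hs_insert[OF fin x1S])
  also have "2 * (Hs S * fact x * (\<Prod>y\<in>S. (real x + real y) / \<bar>real x - real y\<bar>) /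
        (Hs S * fact (Suc x) * (\<Prod>y\<in>S. (real (Suc x) + real y) / \<bar>real (Suc x) - real y\<bar>)))
      = 2 / (real x + 1) * ((\<Prod>y\<in>S. (real x + real y) / \<bar>real x - real y\<bar>) /
                            (\<Prod>y\<in>S. (real (Suc x) + real y) / \<bar>real (Suc x) - real y\<bar>))"
  proof -
    have g: "\<And>H f P1 P2 z::real. 0 < H \<Longrightarrow> 0 < f \<Longrightarrow> 0 < z \<Longrightarrow>
        2 * (H * f * P1 / (H * (z * f) * P2)) = 2 / z * (P1 / P2)"
      by (simp add: field_simps)
    have e: "fact (Suc x) = (real x + 1) * (fact x :: real)" by (simp add: fact_Suc)
    show ?thesis unfolding e by (rule g) (auto intro: Hs_pos[OF fin])
  qed
  also have "(\<Prod>y\<in>S. (real x + real y) / \<bar>real x - real y\<bar>) /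
             (\<Prod>y\<in>S. (real (Suc x) + real y) / \<bar>real (Suc x) - real y\<bar>)
           = (\<Prod>y\<in>S. ((real x + real y) / \<bar>real x - real y\<bar>) / ((real (Suc x) + real y) / \<bar>real (Suc x) - real y\<bar>))"
    by (rule prod_dividef[symmetric])
  also have "\<dots> = (\<Prod>y\<in>S. (QQ x - qq y) / (QQ x - QQ y))"
  proof (rule prod.cong[OF refl])
    fix y assume yS: "y \<in> S"
    have yx: "y \<noteq> x" "y \<noteq> Suc x" using yS xS x1S by auto
    define a where "a = real x"
    define c where "c = real y"
    have Q1: "QQ x - qq y = (a + c) * (a + 1 - c)" unfolding QQ_def qq_def a_def c_def by (simp add: algebra_simps)
    have Q2: "QQ x - QQ y = (a - c) * (a + c + 1)" unfolding QQ_def a_def c_def by (simp add: algebra_simps)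
    have ne: "a \<noteq> c" "a + 1 \<noteq> c" using yx unfolding a_def c_def by auto
    have pos: "0 < a + c + 1" "0 \<le> a" "0 \<le> c" unfolding a_def c_def by auto
    show "((real x + real y) / \<bar>real x - real y\<bar>) / ((real (Suc x) + real y) / \<bar>real (Suc x) - real y\<bar>)
          = (QQ x - qq y) / (QQ x - QQ y)"
      unfolding Q1 Q2 of_nat_Suc a_def[symmetric] c_def[symmetric]
    proof (cases "y < x")
      case True
      then have True: "c < a" unfolding a_def c_def by simp
      then have "a + 1 - c > 0" by simp
      then show "(a + c) / \<bar>a - c\<bar> / ((1 + a + c) / \<bar>1 + a - c\<bar>) = (a + c) * (a + 1 - c) / ((a - c) * (a + c + 1))"
        using True pos by (simp add: field_simps abs_if)
    next
      case False
      then have "Suc x < y" using yx by simp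
      then have h: "1 + a < c" unfolding a_def c_def by simp
      have e1: "\<bar>a - c\<bar> = c - a" "\<bar>1 + a - c\<bar> = c - 1 - a" using h by auto
      have nz: "c - a \<noteq> 0" "a + c + 1 \<noteq> 0" "c - 1 - a \<noteq> 0" "1 + a + c \<noteq> 0" using h pos by auto
      show "(a + c) / \<bar>a - c\<bar> / ((1 + a + c) / \<bar>1 + a - c\<bar>) = (a + c) * (a + 1 - c) / ((a - c) * (a + c + 1))"
        unfolding e1 using nz h by (simp add: divide_simps) (simp add: algebra_simps)
    qed
  qed
  also have "2 / (real x + 1) * (\<Prod>y\<in>S. (QQ x - qq y) / (QQ x - QQ y)) = Aw (set mu) x"
    unfolding Aw_def S_def by simp
  finally show ?thesis unfolding x_def .
qed

lemma one_notin:
  assumes sm: "strict_partition mu" and iI: "Suc (length mu) \<in> Iset mu"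
  shows "1 \<notin> set mu"
proof
  assume one: "1 \<in> set mu"
  then have ne: "length mu \<ge> 1" by (cases mu) auto
  have i: "1 \<le> Suc (length mu)" "Suc (length mu) \<le> Suc (length mu)" by auto
  have "part mu (Suc (length mu)) + 2 \<le> part mu (length mu)"
    using Iset_iff[OF sm i] iI ne by simp
  then have g: "2 \<le> part mu (length mu)" by simp
  have "1 \<in> part mu ` {1..length mu}" using one part_bij(2)[OF sm] by simp
  then obtain k where k: "k \<in> {1..length mu}" "part mu k = 1" by (metis imageE)
  have "part mu (length mu) \<le> part mu k" using sp_le[OF sm, of k "length mu"] k by simp
  then show False using g k by simp
qed

lemma W_new:
  assumes sm: "strict_partition mu" and iI: "Suc (length mu) \<in> Iset mu"
  shows "W (addbox mu (Suc (length mu))) mu = A0 (set mu)"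
proof -
  define X where "X = set mu"
  have i: "1 \<le> Suc (length mu)" "Suc (length mu) \<le> Suc (length mu)" by auto
  have sa: "strict_partition (addbox mu (Suc (length mu)))" using iI unfolding Iset_def by simp
  have one: "1 \<notin> X" using one_notin[OF sm iI] unfolding X_def .
  have fin: "finite X" unfolding X_def by simp
  have ge2: "2 \<le> y" if y: "y \<in> X" for y
  proof -
    have "0 < y" using y sm unfolding X_def Defs.strict_partition_def by blast
    moreover have "y \<noteq> 1" using y one by blast
    ultimately show ?thesis by linarith
  qed
  have exp: "int (psize (addbox mu (Suc (length mu)))) - int (plen (addbox mu (Suc (length mu)))) - int (psize mu) + int (plen mu) = 0"
    using psize_addbox[OF i] length_addbox[OF i] by (simp add: Defs.plen_def)
  have "W (addbox mu (Suc (length mu))) mu = Hs X / Hs (insert 1 X)"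
    unfolding W_def exp using hookprod_Hs[OF sm] hookprod_Hs[OF sa] set_addbox_new[of mu]
    by (simp add: X_def)
  also have "Hs (insert 1 X) = Hs X * fact 1 * (\<Prod>y\<in>X. (real 1 + real y) / \<bar>real 1 - real y\<bar>)"
    by (rule Hs_insert[OF fin one])
  also have "Hs X / (Hs X * fact 1 * (\<Prod>y\<in>X. (real 1 + real y) / \<bar>real 1 - real y\<bar>)) =
             1 / (\<Prod>y\<in>X. (real 1 + real y) / \<bar>real 1 - real y\<bar>)"
    using Hs_pos[OF fin] by simp
  also have "\<dots> = (\<Prod>y\<in>X. 1 / ((real 1 + real y) / \<bar>real 1 - real y\<bar>))"
    by (simp add: prod_dividef)
  also have "\<dots> = A0 X" unfolding A0_def
  proof (rule prod.cong[OF refl])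
    fix y assume "y \<in> X"
    then have y2: "2 \<le> y" by (rule ge2)
    then have yr: "real y \<ge> 2" by simp
    have a: "qq y / QQ y = (real y - 1) / (real y + 1)"
      unfolding QQ_def qq_def using yr by (metis mult.commute mult_divide_mult_cancel_left_if not_numeral_le_zero)
    have b: "1 / ((real 1 + real y) / \<bar>real 1 - real y\<bar>) = (real y - 1) / (real y + 1)"
      using yr by (simp add: abs_if add.commute)
    show "1 / ((real 1 + real y) / \<bar>real 1 - real y\<bar>) = qq y / QQ y" unfolding a b ..
  qed
  finally show ?thesis unfolding X_def .
qed

lemma Aw_zero:
  assumes sm: "strict_partition mu" and i: "1 \<le> i" "i \<le> length mu" and nI: "i \<notin> Iset mu"
  shows "Aw (set mu) (part mu i) = 0"
proof -
  have i': "1 \<le> i" "i \<le> Suc (length mu)" using i by auto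
  have i2: "2 \<le> i" and lt: "part mu (i - 1) < part mu i + 2" using Iset_iff[OF sm i'] nI by auto
  have "part mu (Suc (i - 1)) < part mu (i - 1)" using sp_dec[OF sm, of "i - 1"] i i2 by simp
  then have eq: "part mu (i - 1) = Suc (part mu i)" using lt i2 by simp
  have "part mu (i - 1) \<in> set mu" using part_bij(2)[OF sm] i i2 by force
  then have y: "Suc (part mu i) \<in> set mu - {part mu i}" using eq by simp
  have "(\<Prod>y\<in>set mu - {part mu i}. (QQ (part mu i) - qq y) / (QQ (part mu i) - QQ y)) = 0"
    by (rule prod_zero) (use y in \<open>auto intro!: bexI[of _ "Suc (part mu i)"] simp: QQ_def qq_def algebra_simps\<close>)
  then show ?thesis unfolding Aw_def by simp
qed

lemma A0_zero:
  assumes sm: "strict_partition mu" and nI: "Suc (length mu) \<notin> Iset mu"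
  shows "A0 (set mu) = 0"
proof -
  have i': "1 \<le> Suc (length mu)" "Suc (length mu) \<le> Suc (length mu)" by auto
  have c: "2 \<le> Suc (length mu)" and lt: "part mu (length mu) < 2"
    using Iset_iff[OF sm i'] nI part_beyond[of mu "Suc (length mu)"] by auto
  have "0 < part mu (length mu)" using sp_pos[OF sm, of "length mu"] c by simp
  then have p1: "part mu (length mu) = 1" using lt by simp
  have "part mu (length mu) \<in> set mu" using part_bij(2)[OF sm] c by force
  then have "1 \<in> set mu" using p1 by simp
  then show ?thesis unfolding A0_def
    by (intro prod_zero) (auto intro!: bexI[of _ 1] simp: qq_def)
qed

lemma onebox:
  assumes sm: "strict_partition mu"
  shows "(\<Sum>i\<in>Iset mu. W (addbox mu i) mu) = 1"
    and "(\<Sum>i\<in>Iset mu. W (addbox mu i) mu * (Cc (addbox mu i) - Cc mu)) = real (psize mu)"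
proof -
  define X where "X = set mu"
  define n where "n = length mu"
  define F where "F i = (if i \<le> n then Aw X (part mu i) else A0 X)" for i
  have fin: "finite X" unfolding X_def by simp
  have X0: "0 \<notin> X" using sm unfolding X_def Defs.strict_partition_def by auto
  have Isub: "Iset mu \<subseteq> {1..Suc n}" unfolding Iset_def n_def by auto
  have WF: "W (addbox mu i) mu = F i" if "i \<in> Iset mu" for i
  proof (cases "i \<le> n")
    case True then show ?thesis using W_old[OF sm that] unfolding F_def X_def n_def by simp
  next
    case False
    then have "i = Suc n" using Isub that by auto
    then show ?thesis using W_new[OF sm] that unfolding F_def X_def n_def by simp
  qed
  have F0: "F i = 0" if "i \<in> {1..Suc n} - Iset mu" for i
  proof (cases "i \<le> n")
    case True then show ?thesis using Aw_zero[OF sm, of i] that unfolding F_def X_def n_def by auto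
  next
    case False
    then have "i = Suc n" using that by auto
    then show ?thesis using A0_zero[OF sm] that unfolding F_def X_def n_def by auto
  qed
  have sumF: "(\<Sum>i\<in>Iset mu. F i * g i) = (\<Sum>i\<in>{1..n}. Aw X (part mu i) * g i) + A0 X * g (Suc n)" for g
  proof -
    have "(\<Sum>i\<in>Iset mu. F i * g i) = (\<Sum>i\<in>{1..Suc n}. F i * g i)"
      by (rule sum.mono_neutral_left) (use Isub F0 in auto)
    also have "\<dots> = (\<Sum>i\<in>{1..n}. F i * g i) + F (Suc n) * g (Suc n)" by simp
    also have "(\<Sum>i\<in>{1..n}. F i * g i) = (\<Sum>i\<in>{1..n}. Aw X (part mu i) * g i)"
      by (rule sum.cong) (auto simp: F_def)
    finally show ?thesis by (simp add: F_def)
  qed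
  have reidx: "(\<Sum>i\<in>{1..n}. h (part mu i)) = (\<Sum>x\<in>X. h x)" for h :: "nat \<Rightarrow> real"
    unfolding X_def n_def part_bij(2)[OF sm, symmetric] by (rule sum.reindex[OF part_bij(1)[OF sm], symmetric, unfolded comp_def])
  show "(\<Sum>i\<in>Iset mu. W (addbox mu i) mu) = 1"
  proof -
    have "(\<Sum>i\<in>Iset mu. W (addbox mu i) mu) = (\<Sum>i\<in>Iset mu. F i * 1)" by (rule sum.cong) (auto simp: WF)
    also have "\<dots> = (\<Sum>x\<in>X. Aw X x) + A0 X" unfolding sumF using reidx[of "\<lambda>x. Aw X x"] by simp
    also have "\<dots> = 1" using ident1[OF fin X0] by simp
    finally show ?thesis .
  qed
  show "(\<Sum>i\<in>Iset mu. W (addbox mu i) mu * (Cc (addbox mu i) - Cc mu)) = real (psize mu)"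
  proof -
    have "(\<Sum>i\<in>Iset mu. W (addbox mu i) mu * (Cc (addbox mu i) - Cc mu)) = (\<Sum>i\<in>Iset mu. F i * (QQ (part mu i) / 2))"
    proof (rule sum.cong[OF refl])
      fix i assume iI: "i \<in> Iset mu"
      then have i: "1 \<le> i" "i \<le> Suc (length mu)" using Isub unfolding n_def by auto
      show "W (addbox mu i) mu * (Cc (addbox mu i) - Cc mu) = F i * (QQ (part mu i) / 2)"
        using WF[OF iI] Cc_addbox[OF i] by simp
    qed
    also have "\<dots> = (\<Sum>x\<in>X. Aw X x * (QQ x / 2))"
      unfolding sumF using reidx[of "\<lambda>x. Aw X x * (QQ x / 2)"] by (simp add: n_def part_beyond)
    also have "\<dots> = (\<Sum>x\<in>X. Aw X x * QQ x) / 2" by (simp add: sum_divide_distrib)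
    also have "\<dots> = (\<Sum>x\<in>X. real x)" using ident2[OF fin X0] by simp
    also have "\<dots> = real (psize mu)"
      unfolding X_def Defs.psize_def using sum_list_distinct_conv_sum_set[OF sp_distinct[OF sm], of real]
      by (simp add: sum_list_of_nat[symmetric])
    finally show ?thesis .
  qed
qed


definition Lset :: "nat \<Rightarrow> nat list \<Rightarrow> nat list set" where
  "Lset n mu = {lam. strict_partition lam \<and> contains lam mu \<and> psize lam = psize mu + n}"

lemma length_le_sum: "\<forall>x\<in>set xs. 0 < (x::nat) \<Longrightarrow> length xs \<le> sum_list xs"
  by (induction xs) auto

lemma Lset_finite: "finite (Lset n mu)"
proof -
  define N where "N = psize mu + n"
  have "Lset n mu \<subseteq> {xs. set xs \<subseteq> {0..N} \<and> length xs \<le> N}"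
  proof
    fix xs assume "xs \<in> Lset n mu"
    then have sx: "strict_partition xs" and ps: "sum_list xs = N" unfolding Lset_def N_def Defs.psize_def by auto
    have "x \<le> N" if "x \<in> set xs" for x using member_le_sum_list[OF that] ps by simp
    then have "set xs \<subseteq> {0..N}" by auto
    moreover have "length xs \<le> N" using length_le_sum[of xs] sx ps unfolding Defs.strict_partition_def by simp
    ultimately show "xs \<in> {xs. set xs \<subseteq> {0..N} \<and> length xs \<le> N}" by simp
  qed
  then show ?thesis by (rule finite_subset) (rule finite_lists_length_le, simp)
qed

lemma Lset_0: assumes sm: "strict_partition mu" shows "Lset 0 mu = {mu}"
proof (intro set_eqI iffI)
  fix lam assume "lam \<in> Lset 0 mu"
  then have sl: "strict_partition lam" and c: "contains lam mu" and ps: "psize lam = psize mu"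
    unfolding Lset_def by auto
  define N where "N = max (length lam) (length mu)"
  have "(\<Sum>k=1..N. part lam k) = (\<Sum>k=1..N. part mu k)"
    using ps psize_part_upto[of lam N] psize_part_upto[of mu N] unfolding N_def by simp
  then have "(\<Sum>k=1..N. part lam k - part mu k) = 0"
    using c unfolding Defs.contains_def by (simp add: sum_subtractf_nat)
  then have "\<forall>k\<in>{1..N}. part lam k - part mu k = 0" by (subst sum_eq_0_iff[symmetric]) simp_all
  then have eqk: "part lam k = part mu k" if "k \<in> {1..N}" for k
  proof -
    have "part lam k - part mu k = 0" using that \<open>\<forall>k\<in>{1..N}. part lam k - part mu k = 0\<close> by blast
    moreover have "part mu k \<le> part lam k" using c unfolding Defs.contains_def by blast
    ultimately show ?thesis by simp
  qed
  have "part lam = part mu"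
  proof
    fix k show "part lam k = part mu k"
    proof (cases "k \<in> {1..N}")
      case True then show ?thesis by (rule eqk)
    next
      case False
      then have "k = 0 \<or> N < k" by auto
      then show ?thesis unfolding N_def by (auto simp: part_beyond)
    qed
  qed
  then show "lam \<in> {mu}" using sp_eq_imp_eq[OF sl sm] by simp
next
  fix lam assume "lam \<in> {mu}"
  then show "lam \<in> Lset 0 mu" using sm unfolding Lset_def Defs.contains_def by simp
qed

lemma ST_empty: "standard_tableaux {} = {\<lambda>_. 0}"
  unfolding Defs.standard_tableaux_def by (auto simp: bij_betw_def)

lemma num_syt_self: "num_syt mu mu = 1"
  unfolding Defs.num_syt_def Defs.skew_def by (simp add: ST_empty)

lemma W_self: "W mu mu = 1"
  using hookprod_pos[of mu] unfolding W_def by simp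

lemma W_mult: "W lam mu = W lam nu * W nu mu"
proof -
  have e: "int (psize lam) - int (plen lam) - int (psize mu) + int (plen mu) =
      (int (psize lam) - int (plen lam) - int (psize nu) + int (plen nu)) +
      (int (psize nu) - int (plen nu) - int (psize mu) + int (plen mu))" by simp
  have h: "real (hookprod nu) \<noteq> 0" using hookprod_pos[of nu] by simp
  show ?thesis unfolding W_def e power_int_add[of "2::real", OF disjI1, OF zero_neq_numeral[symmetric]]
    using h by simp
qed

lemma Lset_step:
  assumes i: "i \<in> Iset mu"
  shows "{lam \<in> Lset (Suc n) mu. contains lam (addbox mu i)} = Lset n (addbox mu i)"
proof -
  have i1: "1 \<le> i" "i \<le> Suc (length mu)" using i unfolding Iset_def by auto
  show ?thesis unfolding Lset_def using psize_addbox[OF i1] contains_trans[OF _ contains_addbox[OF i1]]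
    by auto
qed

lemma step_sum:
  assumes sm: "strict_partition mu"
  shows "(\<Sum>lam\<in>Lset (Suc n) mu. W lam mu * real (num_syt lam mu) * g lam) =
         (\<Sum>i\<in>Iset mu. W (addbox mu i) mu *
             (\<Sum>lam\<in>Lset n (addbox mu i). W lam (addbox mu i) * real (num_syt lam (addbox mu i)) * g lam))"
proof -
  have "(\<Sum>lam\<in>Lset (Suc n) mu. W lam mu * real (num_syt lam mu) * g lam) =
        (\<Sum>lam\<in>Lset (Suc n) mu. \<Sum>i\<in>{i \<in> Iset mu. contains lam (addbox mu i)}.
            W (addbox mu i) mu * (W lam (addbox mu i) * real (num_syt lam (addbox mu i)) * g lam))"
  proof (rule sum.cong[OF refl])
    fix lam assume "lam \<in> Lset (Suc n) mu"
    then have sl: "strict_partition lam" and c: "contains lam mu" and ps: "psize mu < psize lam"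
      unfolding Lset_def by auto
    have "W lam mu * real (num_syt lam mu) * g lam =
          (\<Sum>i\<in>{i \<in> Iset mu. contains lam (addbox mu i)}. W lam mu * real (num_syt lam (addbox mu i)) * g lam)"
      unfolding syt_rec[OF sl sm c ps] by (simp add: sum_distrib_left sum_distrib_right)
    also have "\<dots> = (\<Sum>i\<in>{i \<in> Iset mu. contains lam (addbox mu i)}.
            W (addbox mu i) mu * (W lam (addbox mu i) * real (num_syt lam (addbox mu i)) * g lam))"
    proof (rule sum.cong[OF refl])
      fix i
      show "W lam mu * real (num_syt lam (addbox mu i)) * g lam =
            W (addbox mu i) mu * (W lam (addbox mu i) * real (num_syt lam (addbox mu i)) * g lam)"
        using W_mult[of lam mu "addbox mu i"] by simp
    qed
    finally show "W lam mu * real (num_syt lam mu) * g lam = \<dots>" .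
  qed
  also have "\<dots> = (\<Sum>i\<in>Iset mu. \<Sum>lam\<in>{lam \<in> Lset (Suc n) mu. contains lam (addbox mu i)}.
            W (addbox mu i) mu * (W lam (addbox mu i) * real (num_syt lam (addbox mu i)) * g lam))"
    by (rule sum.swap_restrict[OF Lset_finite Iset_finite])
  also have "\<dots> = (\<Sum>i\<in>Iset mu. W (addbox mu i) mu *
             (\<Sum>lam\<in>Lset n (addbox mu i). W lam (addbox mu i) * real (num_syt lam (addbox mu i)) * g lam))"
    by (rule sum.cong[OF refl]) (simp add: Lset_step sum_distrib_left)
  finally show ?thesis .
qed

lemma main_ind:
  "strict_partition mu \<Longrightarrow>
    (\<Sum>lam\<in>Lset n mu. W lam mu * real (num_syt lam mu) * 1) = 1 \<and>
    (\<Sum>lam\<in>Lset n mu. W lam mu * real (num_syt lam mu) * (Cc lam - Cc mu)) =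
        real (n choose 2) + real n * real (psize mu)"
proof (induction n arbitrary: mu)
  case 0
  then show ?case by (simp add: Lset_0 W_self num_syt_self)
next
  case (Suc n mu)
  have sm: "strict_partition mu" by fact
  have sn: "strict_partition (addbox mu i)" and pn: "psize (addbox mu i) = psize mu + 1" if "i \<in> Iset mu" for i
    using that psize_addbox[of i mu] unfolding Iset_def by auto
  have IH1: "(\<Sum>lam\<in>Lset n (addbox mu i). W lam (addbox mu i) * real (num_syt lam (addbox mu i)) * 1) = 1"
    and IH2: "(\<Sum>lam\<in>Lset n (addbox mu i). W lam (addbox mu i) * real (num_syt lam (addbox mu i)) * (Cc lam - Cc (addbox mu i))) =
        real (n choose 2) + real n * real (psize mu + 1)"
    if "i \<in> Iset mu" for i using Suc.IH[OF sn[OF that]] pn[OF that] by auto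
  have A: "(\<Sum>lam\<in>Lset (Suc n) mu. W lam mu * real (num_syt lam mu) * 1) = 1"
  proof -
    have "(\<Sum>lam\<in>Lset (Suc n) mu. W lam mu * real (num_syt lam mu) * 1) =
      (\<Sum>i\<in>Iset mu. W (addbox mu i) mu *
        (\<Sum>lam\<in>Lset n (addbox mu i). W lam (addbox mu i) * real (num_syt lam (addbox mu i)) * 1))"
      by (rule step_sum[OF sm])
    also have "\<dots> = (\<Sum>i\<in>Iset mu. W (addbox mu i) mu)"
    proof (rule sum.cong[OF refl])
      fix i assume iI: "i \<in> Iset mu"
      show "W (addbox mu i) mu * (\<Sum>lam\<in>Lset n (addbox mu i). W lam (addbox mu i) * real (num_syt lam (addbox mu i)) * 1) = W (addbox mu i) mu"
        by (subst IH1[OF iI]) simp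
    qed
    finally show ?thesis using onebox(1)[OF sm] by simp
  qed
  have "(\<Sum>lam\<in>Lset (Suc n) mu. W lam mu * real (num_syt lam mu) * (Cc lam - Cc mu)) =
      (\<Sum>i\<in>Iset mu. W (addbox mu i) mu *
        (\<Sum>lam\<in>Lset n (addbox mu i). W lam (addbox mu i) * real (num_syt lam (addbox mu i)) * (Cc lam - Cc mu)))"
    by (rule step_sum[OF sm])
  also have "\<dots> = (\<Sum>i\<in>Iset mu. W (addbox mu i) mu *
        ((real (n choose 2) + real n * real (psize mu + 1)) + (Cc (addbox mu i) - Cc mu)))"
  proof (rule sum.cong[OF refl])
    fix i assume iI: "i \<in> Iset mu"
    define nu where "nu = addbox mu i"
    have "(\<Sum>lam\<in>Lset n nu. W lam nu * real (num_syt lam nu) * (Cc lam - Cc mu)) =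
          (\<Sum>lam\<in>Lset n nu. W lam nu * real (num_syt lam nu) * (Cc lam - Cc nu)) +
          (\<Sum>lam\<in>Lset n nu. W lam nu * real (num_syt lam nu) * 1) * (Cc nu - Cc mu)"
    proof -
      have "(\<Sum>lam\<in>Lset n nu. W lam nu * real (num_syt lam nu) * (Cc lam - Cc mu)) =
            (\<Sum>lam\<in>Lset n nu. W lam nu * real (num_syt lam nu) * (Cc lam - Cc nu) +
                 W lam nu * real (num_syt lam nu) * 1 * (Cc nu - Cc mu))"
        by (rule sum.cong[OF refl]) (simp add: algebra_simps)
      also have "\<dots> = (\<Sum>lam\<in>Lset n nu. W lam nu * real (num_syt lam nu) * (Cc lam - Cc nu)) +
            (\<Sum>lam\<in>Lset n nu. W lam nu * real (num_syt lam nu) * 1 * (Cc nu - Cc mu))"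
        by (rule sum.distrib)
      also have "(\<Sum>lam\<in>Lset n nu. W lam nu * real (num_syt lam nu) * 1 * (Cc nu - Cc mu)) =
            (\<Sum>lam\<in>Lset n nu. W lam nu * real (num_syt lam nu) * 1) * (Cc nu - Cc mu)"
        by (rule sum_distrib_right[symmetric])
      finally show ?thesis .
    qed
    also have "\<dots> = (real (n choose 2) + real n * real (psize mu + 1)) + (Cc nu - Cc mu)"
      using IH1[OF iI] IH2[OF iI] unfolding nu_def by simp
    finally show "W (addbox mu i) mu * (\<Sum>lam\<in>Lset n (addbox mu i). W lam (addbox mu i) * real (num_syt lam (addbox mu i)) * (Cc lam - Cc mu)) =
        W (addbox mu i) mu * ((real (n choose 2) + real n * real (psize mu + 1)) + (Cc (addbox mu i) - Cc mu))"
      unfolding nu_def by simp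
  qed
  also have "\<dots> = (real (n choose 2) + real n * real (psize mu + 1)) * (\<Sum>i\<in>Iset mu. W (addbox mu i) mu)
        + (\<Sum>i\<in>Iset mu. W (addbox mu i) mu * (Cc (addbox mu i) - Cc mu))"
  proof -
    define K where "K = real (n choose 2) + real n * real (psize mu + 1)"
    have "(\<Sum>i\<in>Iset mu. W (addbox mu i) mu * (K + (Cc (addbox mu i) - Cc mu))) =
          (\<Sum>i\<in>Iset mu. K * W (addbox mu i) mu + W (addbox mu i) mu * (Cc (addbox mu i) - Cc mu))"
      by (rule sum.cong[OF refl]) (simp add: algebra_simps)
    also have "\<dots> = K * (\<Sum>i\<in>Iset mu. W (addbox mu i) mu) + (\<Sum>i\<in>Iset mu. W (addbox mu i) mu * (Cc (addbox mu i) - Cc mu))"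
      by (simp add: sum.distrib sum_distrib_left)
    finally show ?thesis unfolding K_def .
  qed
  also have "\<dots> = real (Suc n choose 2) + real (Suc n) * real (psize mu)"
    using onebox[OF sm] by (simp add: numeral_2_eq_2 algebra_simps)
  finally show ?case using A by simp
qed


theorem theorem1p3:
  fixes mu :: "nat list" and n :: nat
  assumes "strict_partition mu"
  shows "(\<Sum>lam\<in>{lam. strict_partition lam \<and> contains lam mu \<and> psize lam = psize mu + n}.
            (2::real) powi (int (psize lam) - int (plen lam) - int (psize mu) + int (plen mu))
            * real (num_syt lam mu) * real (hookprod mu) / real (hookprod lam)
            * ((\<Sum>b\<in>diagram lam. (real_of_int (content b) gchoose 2))
               - (\<Sum>b\<in>diagram mu. (real_of_int (content b) gchoose 2))))
         = real (n choose 2) + real n * real (psize mu)"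
proof -
  have M: "(\<Sum>lam\<in>Lset n mu. W lam mu * real (num_syt lam mu) * (Cc lam - Cc mu)) =
        real (n choose 2) + real n * real (psize mu)"
    using main_ind[OF assms, of n] by blast
  have "(\<Sum>lam\<in>{lam. strict_partition lam \<and> contains lam mu \<and> psize lam = psize mu + n}.
            (2::real) powi (int (psize lam) - int (plen lam) - int (psize mu) + int (plen mu))
            * real (num_syt lam mu) * real (hookprod mu) / real (hookprod lam)
            * ((\<Sum>b\<in>diagram lam. (real_of_int (content b) gchoose 2))
               - (\<Sum>b\<in>diagram mu. (real_of_int (content b) gchoose 2))))
      = (\<Sum>lam\<in>Lset n mu. W lam mu * real (num_syt lam mu) * (Cc lam - Cc mu))"
    unfolding Lset_def by (rule sum.cong[OF refl]) (simp add: W_def Cc_def)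
  then show ?thesis using M by simp
qed

end
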